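(* Suppose the third-order ODE $u'''=f(x,u,u',u'')$ (with $I_3\ne0$) is equivalent to $\bar u'''=\bar a^3(\bar x)\bar u$ under a contact transformation $\bar x=\varphi(x,u,p)$, $\bar u=\psi(x,u,p)$, $\bar p=\chi(x,u,p)$ with nonzero Jacobian. Set $H(x,u,p)=\bar a'(\varphi)/\bar a(\varphi)^2$ and $b(x,u,p)=\bar a(\varphi)$. Then: (1) $H$ satisfies $-\frac{2}{J_3}\hat D_xH+H^2=K$; (2) $b$ satisfies $\hat D_xb=-J_3Hb$; (3) there is a nonzero function $a_1(x,u,p)$ satisfying $\hat D_xa_1=J_3(H+I_5)a_1$, $a_{1_u}=(HI_7-Q)a_1$, $a_{1_p}=\big(I_4(H+I_5)-\tfrac{I_7}{J_3}\big)a_1$, $a_{1_q}=0$; (4) $\varphi$ satisfies $\hat D_x\varphi=-\tfrac{J_3}{b}$, $\varphi_u=-\tfrac{I_7}{b}$, $\varphi_p=-\tfrac{I_4}{b}$; (5) with $\eta=\hat D_x\chi/\hat D_x\varphi$ (a function of $(x,u,p,q)$) and $\bar f=\bar a^3(\varphi)\psi$, the functions $\eta,\chi,\psi$ satisfy $\hat D_x\eta=-\tfrac{J_3}{b}\bar f$, $\eta_u=\big(\tfrac{(H+I_5)^2}{2}+\tfrac{I_2}{2J_3^2}\big)b^2a_1-\tfrac{I_7}{b}\bar f$, $\eta_p=\big(\tfrac{H+I_5}{J_3}+\tfrac{I_1}{3J_3^2}\big)b^2a_1-\tfrac{I_4}{b}\bar f$, $\eta_q=\tfrac{b^2a_1}{J_3^2}$;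 $\hat D_x\chi=-\tfrac{J_3}{b}\eta$, $\chi_u=-(H+I_5)ba_1-\tfrac{I_7}{b}\eta$, $\chi_p=-\tfrac{ba_1}{J_3}-\tfrac{I_4}{b}\eta$; $I_7\hat D_x\psi=J_3(\psi_u-a_1)$, $\psi_x=\chi\varphi_x-pa_1$, $\psi_p=-\tfrac{I_4}{b}\chi$; where also $\chi=\hat D_x\psi/\hat D_x\varphi$. Consequently the transformation can be constructed by successively solving these systems for $H,b,a_1,\varphi,\eta,\chi,\psi$.
   Context: Coordinates $(x,u,p,q)$ with $p=u'$, $q=u''$; subscripts denote partial derivatives; $\hat D_x=\partial_x+p\partial_u+q\partial_p+f\partial_q$. A contact transformation is a local diffeomorphism $\bar x=\varphi(x,u,p)$, $\bar u=\psi(x,u,p)$, $\bar p=\chi(x,u,p)$ with $d\bar u-\bar p\,d\bar x=\lambda(du-p\,dx)$ for some $\lambda(x,u,p)$. Define $I_1=-f_q$, $I_2=-\tfrac29I_1^2-f_p-\tfrac13\hat D_xI_1$, $I_3=-\tfrac13I_1I_2-f_u-\tfrac12\hat D_xI_2$, $J_3=I_3^{1/3}$ (real cube root), $I_4=J_{3_q}$, $I_5=\frac{1}{3J_3^2}(I_1J_3+3\hat D_xJ_3)$, $I_7=-I_{5_q}J_3^2$, $I_9=2J_3\hat D_xI_5-I_2+J_3^2I_5^2$, $K=I_9/J_3^2$, and $Q=-\frac{I_1I_7+3J_3^2I_{5_p}+3J_{3_u}-3J_3I_4\hat D_xI_5}{3J_3}$. *)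

theory Defs
  imports "HOL-Analysis.Analysis"
begin

type_synonym R3 = "real \<times> real \<times> real"
type_synonym R4 = "real \<times> real \<times> real \<times> real"

text \<open>C-infinity smoothness on a set U (meant to be open): differentiable at every point
  of U, and every first partial derivative (Frechet derivative applied to a basis vector)
  is again smooth on U.\<close>
coinductive smooth_on :: "'a::euclidean_space set \<Rightarrow> ('a \<Rightarrow> real) \<Rightarrow> bool" where
  "(\<forall>z\<in>U. g differentiable (at z)) \<Longrightarrow>
   (\<forall>i\<in>Basis. smooth_on U (\<lambda>z. frechet_derivative g (at z) i)) \<Longrightarrow> smooth_on U g"

definition px4 :: "(R4 \<Rightarrow> real) \<Rightarrow> R4 \<Rightarrow> real" where
  "px4 g = (\<lambda>(x,u,p,q). deriv (\<lambda>t. g (t,u,p,q)) x)"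
definition pu4 :: "(R4 \<Rightarrow> real) \<Rightarrow> R4 \<Rightarrow> real" where
  "pu4 g = (\<lambda>(x,u,p,q). deriv (\<lambda>t. g (x,t,p,q)) u)"
definition pp4 :: "(R4 \<Rightarrow> real) \<Rightarrow> R4 \<Rightarrow> real" where
  "pp4 g = (\<lambda>(x,u,p,q). deriv (\<lambda>t. g (x,u,t,q)) p)"
definition pq4 :: "(R4 \<Rightarrow> real) \<Rightarrow> R4 \<Rightarrow> real" where
  "pq4 g = (\<lambda>(x,u,p,q). deriv (\<lambda>t. g (x,u,p,t)) q)"

definition px3 :: "(R3 \<Rightarrow> real) \<Rightarrow> R3 \<Rightarrow> real" where
  "px3 g = (\<lambda>(x,u,p). deriv (\<lambda>t. g (t,u,p)) x)"
definition pu3 :: "(R3 \<Rightarrow> real) \<Rightarrow> R3 \<Rightarrow> real" where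
  "pu3 g = (\<lambda>(x,u,p). deriv (\<lambda>t. g (x,t,p)) u)"
definition pp3 :: "(R3 \<Rightarrow> real) \<Rightarrow> R3 \<Rightarrow> real" where
  "pp3 g = (\<lambda>(x,u,p). deriv (\<lambda>t. g (x,u,t)) p)"

definition lift3 :: "(R3 \<Rightarrow> real) \<Rightarrow> R4 \<Rightarrow> real" where
  "lift3 h = (\<lambda>(x,u,p,q). h (x,u,p))"

text \<open>Total derivative along u''' = f(x,u,p,q).\<close>
definition Dhat :: "(R4 \<Rightarrow> real) \<Rightarrow> (R4 \<Rightarrow> real) \<Rightarrow> R4 \<Rightarrow> real" where
  "Dhat f g = (\<lambda>(x,u,p,q). px4 g (x,u,p,q) + p * pu4 g (x,u,p,q) + q * pp4 g (x,u,p,q)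
                            + f (x,u,p,q) * pq4 g (x,u,p,q))"

definition I1 :: "(R4 \<Rightarrow> real) \<Rightarrow> R4 \<Rightarrow> real" where
  "I1 f = (\<lambda>z. - pq4 f z)"
definition I2 :: "(R4 \<Rightarrow> real) \<Rightarrow> R4 \<Rightarrow> real" where
  "I2 f = (\<lambda>z. - (2/9) * (I1 f z)^2 - pp4 f z - (1/3) * Dhat f (I1 f) z)"
definition I3 :: "(R4 \<Rightarrow> real) \<Rightarrow> R4 \<Rightarrow> real" where
  "I3 f = (\<lambda>z. - (1/3) * I1 f z * I2 f z - pu4 f z - (1/2) * Dhat f (I2 f) z)"
definition J3 :: "(R4 \<Rightarrow> real) \<Rightarrow> R4 \<Rightarrow> real" where
  "J3 f = (\<lambda>z. root 3 (I3 f z))"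
definition I4 :: "(R4 \<Rightarrow> real) \<Rightarrow> R4 \<Rightarrow> real" where
  "I4 f = pq4 (J3 f)"
definition I5 :: "(R4 \<Rightarrow> real) \<Rightarrow> R4 \<Rightarrow> real" where
  "I5 f = (\<lambda>z. (I1 f z * J3 f z + 3 * Dhat f (J3 f) z) / (3 * (J3 f z)^2))"
definition I7 :: "(R4 \<Rightarrow> real) \<Rightarrow> R4 \<Rightarrow> real" where
  "I7 f = (\<lambda>z. - pq4 (I5 f) z * (J3 f z)^2)"
definition I9 :: "(R4 \<Rightarrow> real) \<Rightarrow> R4 \<Rightarrow> real" where
  "I9 f = (\<lambda>z. 2 * J3 f z * Dhat f (I5 f) z - I2 f z + (J3 f z)^2 * (I5 f z)^2)"
definition Kinv :: "(R4 \<Rightarrow> real) \<Rightarrow> R4 \<Rightarrow> real" where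
  "Kinv f = (\<lambda>z. I9 f z / (J3 f z)^2)"
definition Qinv :: "(R4 \<Rightarrow> real) \<Rightarrow> R4 \<Rightarrow> real" where
  "Qinv f = (\<lambda>z. - (I1 f z * I7 f z + 3 * (J3 f z)^2 * pp4 (I5 f) z + 3 * pu4 (J3 f) z
                    - 3 * J3 f z * I4 f z * Dhat f (I5 f) z) / (3 * J3 f z))"

text \<open>Contact transformation on an open set V of (x,u,p)-space: smooth, nonzero Jacobian
  (hence a local diffeomorphism), and d psi - chi d phi = lambda (du - p dx).\<close>
definition contact_transformation :: "R3 set \<Rightarrow> (R3 \<Rightarrow> real) \<Rightarrow> (R3 \<Rightarrow> real) \<Rightarrow> (R3 \<Rightarrow> real) \<Rightarrow> bool" where
  "contact_transformation V phi psi chi \<longleftrightarrow>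
     open V \<and> smooth_on V phi \<and> smooth_on V psi \<and> smooth_on V chi \<and>
     (\<forall>z\<in>V.
        px3 phi z * (pu3 psi z * pp3 chi z - pp3 psi z * pu3 chi z)
      - pu3 phi z * (px3 psi z * pp3 chi z - pp3 psi z * px3 chi z)
      + pp3 phi z * (px3 psi z * pu3 chi z - pu3 psi z * px3 chi z) \<noteq> 0) \<and>
     (\<exists>lam :: R3 \<Rightarrow> real. \<forall>x u p. (x,u,p) \<in> V \<longrightarrow>
        px3 psi (x,u,p) - chi (x,u,p) * px3 phi (x,u,p) = - p * lam (x,u,p) \<and>
        pu3 psi (x,u,p) - chi (x,u,p) * pu3 phi (x,u,p) = lam (x,u,p) \<and>
        pp3 psi (x,u,p) - chi (x,u,p) * pp3 phi (x,u,p) = 0)"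

text \<open>The prolonged contact transformation maps u''' = f(x,u,u',u'') (on the open set W of
  (x,u,p,q)-space) to ubar''' = abar(xbar)^3 ubar: with pbar = chi, qbar = eta = Dhat chi / Dhat phi,
  one has rbar = Dhat eta / Dhat phi = abar(phi)^3 psi on W.\<close>
definition equivalent_to_linear ::
  "(R4 \<Rightarrow> real) \<Rightarrow> R4 set \<Rightarrow> (R3 \<Rightarrow> real) \<Rightarrow> (R3 \<Rightarrow> real) \<Rightarrow> (R3 \<Rightarrow> real) \<Rightarrow> (real \<Rightarrow> real) \<Rightarrow> bool" where
  "equivalent_to_linear f W phi psi chi abar \<longleftrightarrow>
     (\<forall>z\<in>W. Dhat f (lift3 phi) z \<noteq> 0) \<and>
     (let eta = (\<lambda>z. Dhat f (lift3 chi) z / Dhat f (lift3 phi) z) in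
      \<forall>z\<in>W. Dhat f eta z / Dhat f (lift3 phi) z = (abar (lift3 phi z))^3 * lift3 psi z)"

end

theory Submission
  imports Defs
begin


lemma smooth_diff: "smooth_on U g \<Longrightarrow> z \<in> U \<Longrightarrow> g differentiable (at z)"
  by (erule smooth_on.cases) auto

lemma smooth_fd: "smooth_on U g \<Longrightarrow> i \<in> Basis \<Longrightarrow> smooth_on U (\<lambda>z. frechet_derivative g (at z) i)"
  by (erule smooth_on.cases) auto

lemma fd_transform:
  assumes "open U" "z \<in> U" "\<forall>y\<in>U. g y = h y" "h differentiable (at z)"
  shows "g differentiable (at z) \<and> frechet_derivative g (at z) = frechet_derivative h (at z)"
proof -
  have "(h has_derivative frechet_derivative h (at z)) (at z)"
    using assms(4) frechet_derivative_works by blast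
  then have "(g has_derivative frechet_derivative h (at z)) (at z)"
    by (rule has_derivative_transform_within_open[OF _ assms(1,2)]) (use assms(3) in auto)
  then show ?thesis
    by (metis differentiableI frechet_derivative_at)
qed

lemma fdw: "g differentiable (at z) \<Longrightarrow> (g has_derivative frechet_derivative g (at z)) (at z)"
  using frechet_derivative_works by blast

lemma fd_eval: "(g has_derivative g') (at z) \<Longrightarrow> frechet_derivative g (at z) i = g' i"
  by (metis frechet_derivative_at)

lemma smooth_coinduct_gen:
  fixes U :: "'a::euclidean_space set"
  assumes U: "open U" and Pg: "P g"
  and step: "\<And>g. P g \<Longrightarrow> (\<forall>z\<in>U. g differentiable (at z)) \<and>
      (\<forall>i\<in>Basis. \<exists>h. (P h \<or> smooth_on U h) \<and> (\<forall>z\<in>U. frechet_derivative g (at z) i = h z))"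
  shows "smooth_on U g"
proof -
  have "\<exists>h. (P h \<or> smooth_on U h) \<and> (\<forall>z\<in>U. g z = h z)" using Pg by blast
  then show ?thesis
  proof (coinduction arbitrary: g rule: smooth_on.coinduct)
    case (smooth_on g)
    then obtain h where h: "P h \<or> smooth_on U h" "\<forall>z\<in>U. g z = h z" by blast
    have hd: "\<forall>z\<in>U. h differentiable (at z)"
      using h(1) step smooth_diff by blast
    have tr: "\<And>z. z \<in> U \<Longrightarrow> g differentiable (at z) \<and> frechet_derivative g (at z) = frechet_derivative h (at z)"
      using fd_transform[OF U _ h(2)] hd by blast
    have "\<forall>i\<in>Basis. \<exists>h'. (P h' \<or> smooth_on U h') \<and> (\<forall>z\<in>U. frechet_derivative h (at z) i = h' z)"
    proof
      fix i :: 'a assume i: "i \<in> Basis"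
      show "\<exists>h'. (P h' \<or> smooth_on U h') \<and> (\<forall>z\<in>U. frechet_derivative h (at z) i = h' z)"
      proof (cases "P h")
        case True then show ?thesis using step i by blast
      next
        case False then have "smooth_on U h" using h(1) by blast
        then show ?thesis using smooth_fd i by blast
      qed
    qed
    then show ?case using tr by auto
  qed
qed

lemma smooth_cong:
  assumes "open U" "smooth_on U g" "\<forall>z\<in>U. g z = h z"
  shows "smooth_on U h"
proof (rule smooth_coinduct_gen[where P="\<lambda>h. \<exists>g. smooth_on U g \<and> (\<forall>z\<in>U. g z = h z)"])
  show "open U" by fact
  show "\<exists>g. smooth_on U g \<and> (\<forall>z\<in>U. g z = h z)" using assms by blast
next
  fix h assume "\<exists>g. smooth_on U g \<and> (\<forall>z\<in>U. g z = h z)"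
  then obtain g where g: "smooth_on U g" "\<forall>z\<in>U. g z = h z" by blast
  have tr: "\<And>z. z \<in> U \<Longrightarrow> h differentiable (at z) \<and> frechet_derivative h (at z) = frechet_derivative g (at z)"
    using fd_transform[OF assms(1) _ _ smooth_diff[OF g(1)]] g(2) by metis
  show "(\<forall>z\<in>U. h differentiable (at z)) \<and>
      (\<forall>i\<in>Basis. \<exists>h'. ((\<exists>g. smooth_on U g \<and> (\<forall>z\<in>U. g z = h' z)) \<or> smooth_on U h') \<and> (\<forall>z\<in>U. frechet_derivative h (at z) i = h' z))"
    using tr smooth_fd[OF g(1)] by fastforce
qed

lemma smooth_const: "open U \<Longrightarrow> smooth_on U (\<lambda>_. c)"
proof (rule smooth_coinduct_gen[where P="\<lambda>h. \<exists>c. h = (\<lambda>_. c)"])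
  fix g :: "'a \<Rightarrow> real" assume "\<exists>c. g = (\<lambda>_. c)"
  then obtain c where g: "g = (\<lambda>_. c)" by blast
  have "frechet_derivative g (at z) = (\<lambda>_. 0)" for z
    unfolding g by (rule frechet_derivative_at[symmetric]) (rule has_derivative_const)
  then show "(\<forall>z\<in>U. g differentiable (at z)) \<and>
      (\<forall>i\<in>Basis. \<exists>h. ((\<exists>c. h = (\<lambda>_. c)) \<or> smooth_on U h) \<and> (\<forall>z\<in>U. frechet_derivative g (at z) i = h z))"
    using g by auto
qed auto

lemma deriv_fd_real:
  fixes k :: "real \<Rightarrow> real"
  assumes "k differentiable (at t)"
  shows "frechet_derivative k (at t) = (\<lambda>x. deriv k t * x)"
proof -
  have "DERIV k t :> deriv k t" using assms DERIV_deriv_iff_real_differentiable by blast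
  then have "(k has_derivative (\<lambda>x. deriv k t * x)) (at t)" by (simp add: has_field_derivative_def)
  then show ?thesis by (rule frechet_derivative_at[symmetric])
qed

lemma smooth_deriv:
  fixes k :: "real \<Rightarrow> real"
  assumes "open T" "smooth_on T k"
  shows "smooth_on T (deriv k)"
proof -
  have "smooth_on T (\<lambda>t. frechet_derivative k (at t) 1)" using smooth_fd[OF assms(2)] by simp
  moreover have "\<forall>t\<in>T. frechet_derivative k (at t) 1 = deriv k t"
    using deriv_fd_real smooth_diff[OF assms(2)] by simp
  ultimately show ?thesis using smooth_cong[OF assms(1)] by blast
qed

inductive sm :: "'a::euclidean_space set \<Rightarrow> ('a \<Rightarrow> real) \<Rightarrow> bool" for U where
  sm_base: "smooth_on U g \<Longrightarrow> sm U g"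
| sm_add: "sm U g \<Longrightarrow> sm U h \<Longrightarrow> sm U (\<lambda>z. g z + h z)"
| sm_mul: "sm U g \<Longrightarrow> sm U h \<Longrightarrow> sm U (\<lambda>z. g z * h z)"
| sm_inv: "sm U g \<Longrightarrow> (\<forall>z\<in>U. g z \<noteq> 0) \<Longrightarrow> sm U (\<lambda>z. inverse (g z))"
| sm_comp: "smooth_on T k \<Longrightarrow> open T \<Longrightarrow> sm U g \<Longrightarrow> (\<forall>z\<in>U. g z \<in> T) \<Longrightarrow> sm U (\<lambda>z. k (g z))"

lemma sm_step:
  assumes U: "open U" and "sm U g"
  shows "(\<forall>z\<in>U. g differentiable (at z)) \<and>
      (\<forall>i\<in>Basis. \<exists>h. sm U h \<and> (\<forall>z\<in>U. frechet_derivative g (at z) i = h z))"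
  using assms(2)
proof induction
  case (sm_base g)
  then show ?case using smooth_diff smooth_fd sm.sm_base by blast
next
  case (sm_add g h)
  have fd: "frechet_derivative (\<lambda>z. g z + h z) (at z) i = frechet_derivative g (at z) i + frechet_derivative h (at z) i"
    if "z \<in> U" for z i
  proof -
    have "((\<lambda>z. g z + h z) has_derivative (\<lambda>x. frechet_derivative g (at z) x + frechet_derivative h (at z) x)) (at z)"
      using sm_add that by (intro has_derivative_add fdw) auto
    then show ?thesis by (rule fd_eval)
  qed
  show ?case
  proof (intro conjI ballI)
    show "(\<lambda>z. g z + h z) differentiable at z" if "z \<in> U" for z using sm_add that by auto
    fix i :: 'a assume i: "i \<in> Basis"
    obtain h1 h2 where "sm U h1" "\<forall>z\<in>U. frechet_derivative g (at z) i = h1 z"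
      "sm U h2" "\<forall>z\<in>U. frechet_derivative h (at z) i = h2 z" using sm_add i by metis
    then show "\<exists>h'. sm U h' \<and> (\<forall>z\<in>U. frechet_derivative (\<lambda>z. g z + h z) (at z) i = h' z)"
      using fd by (intro exI[of _ "\<lambda>z. h1 z + h2 z"]) (auto intro: sm.sm_add)
  qed
next
  case (sm_mul g h)
  have fd: "frechet_derivative (\<lambda>z. g z * h z) (at z) i = g z * frechet_derivative h (at z) i + frechet_derivative g (at z) i * h z"
    if "z \<in> U" for z i
  proof -
    have "((\<lambda>z. g z * h z) has_derivative (\<lambda>x. g z * frechet_derivative h (at z) x + frechet_derivative g (at z) x * h z)) (at z)"
      using sm_mul that by (intro has_derivative_mult fdw) auto
    then show ?thesis by (rule fd_eval)
  qed
  show ?case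
  proof (intro conjI ballI)
    show "(\<lambda>z. g z * h z) differentiable at z" if "z \<in> U" for z using sm_mul that by auto
    fix i :: 'a assume i: "i \<in> Basis"
    obtain h1 h2 where "sm U h1" "\<forall>z\<in>U. frechet_derivative g (at z) i = h1 z"
      "sm U h2" "\<forall>z\<in>U. frechet_derivative h (at z) i = h2 z" using sm_mul i by metis
    then show "\<exists>h'. sm U h' \<and> (\<forall>z\<in>U. frechet_derivative (\<lambda>z. g z * h z) (at z) i = h' z)"
      using fd sm_mul by (intro exI[of _ "\<lambda>z. g z * h2 z + h1 z * h z"]) (auto intro: sm.sm_add sm.sm_mul)
  qed
next
  case (sm_inv g)
  have fd: "frechet_derivative (\<lambda>z. inverse (g z)) (at z) i = (inverse (g z) * inverse (g z)) * (frechet_derivative g (at z) i * (-1))"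
    if "z \<in> U" for z i
  proof -
    have "((\<lambda>z. inverse (g z)) has_derivative (\<lambda>x. - (inverse (g z) * frechet_derivative g (at z) x * inverse (g z)))) (at z)"
      using sm_inv that by (intro Deriv.has_derivative_inverse fdw) auto
    then show ?thesis by (simp add: fd_eval)
  qed
  have c: "sm U (\<lambda>_. -1)" using smooth_const[OF U] sm.sm_base by blast
  show ?case
  proof (intro conjI ballI)
    show "(\<lambda>z. inverse (g z)) differentiable at z" if "z \<in> U" for z using sm_inv that
      by (auto intro!: differentiable_inverse)
    fix i :: 'a assume i: "i \<in> Basis"
    obtain h1 where "sm U h1" "\<forall>z\<in>U. frechet_derivative g (at z) i = h1 z" using sm_inv i by metis
    show "\<exists>h'. sm U h' \<and> (\<forall>z\<in>U. frechet_derivative (\<lambda>z. inverse (g z)) (at z) i = h' z)"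
    proof (intro exI[of _ "\<lambda>z. (inverse (g z) * inverse (g z)) * (h1 z * (-1))"], rule conjI)
      show "sm U (\<lambda>z. (inverse (g z) * inverse (g z)) * (h1 z * (-1)))"
        using \<open>sm U h1\<close> sm_inv c by (intro sm.sm_mul sm.sm_inv) auto
    qed (use fd \<open>\<forall>z\<in>U. frechet_derivative g (at z) i = h1 z\<close> in auto)
  qed
next
  case (sm_comp T k g)
  have kd: "\<And>t. t \<in> T \<Longrightarrow> k differentiable (at t)" using smooth_diff sm_comp by blast
  have fd: "frechet_derivative (\<lambda>z. k (g z)) (at z) i = deriv k (g z) * frechet_derivative g (at z) i"
    if "z \<in> U" for z i
  proof -
    have "((\<lambda>z. k (g z)) has_derivative (\<lambda>x. frechet_derivative k (at (g z)) (frechet_derivative g (at z) x))) (at z)"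
      by (rule has_derivative_compose[OF fdw fdw]) (use sm_comp that kd in auto)
    then show ?thesis using deriv_fd_real kd sm_comp that by (simp add: fd_eval)
  qed
  have dk: "sm U (\<lambda>z. deriv k (g z))" using sm_comp smooth_deriv by (blast intro: sm.sm_comp)
  show ?case
  proof (intro conjI ballI)
    show "(\<lambda>z. k (g z)) differentiable at z" if "z \<in> U" for z using sm_comp that kd
      differentiable_chain_at[of g z k] by (simp add: o_def)
    fix i :: 'a assume i: "i \<in> Basis"
    obtain h1 where "sm U h1" "\<forall>z\<in>U. frechet_derivative g (at z) i = h1 z" using sm_comp i by metis
    then show "\<exists>h'. sm U h' \<and> (\<forall>z\<in>U. frechet_derivative (\<lambda>z. k (g z)) (at z) i = h' z)"
      using fd dk by (intro exI[of _ "\<lambda>z. deriv k (g z) * h1 z"]) (auto intro!: sm.sm_mul)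
  qed
qed

lemma sm_smooth: assumes "open U" "sm U g" shows "smooth_on U g"
proof (rule smooth_coinduct_gen[where P="sm U"])
  fix g assume "sm U g"
  from sm_step[OF assms(1) this] show "(\<forall>z\<in>U. g differentiable (at z)) \<and>
      (\<forall>i\<in>Basis. \<exists>h. (sm U h \<or> smooth_on U h) \<and> (\<forall>z\<in>U. frechet_derivative g (at z) i = h z))" by blast
qed (use assms in auto)


definition pd :: "'a::real_normed_vector \<Rightarrow> ('a \<Rightarrow> real) \<Rightarrow> 'a \<Rightarrow> real" where
  "pd v g z = deriv (\<lambda>t. g (z + t *\<^sub>R v)) 0"

lemma dir_deriv:
  assumes "g differentiable (at (a + s *\<^sub>R v))"
  shows "((\<lambda>t. g (a + t *\<^sub>R v)) has_real_derivative frechet_derivative g (at (a + s *\<^sub>R v)) v) (at s)"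
proof -
  let ?G = "frechet_derivative g (at (a + s *\<^sub>R v))"
  have lin: "bounded_linear ?G" using assms fdw has_derivative_bounded_linear by blast
  have "((\<lambda>t. a + t *\<^sub>R v) has_derivative (\<lambda>h. h *\<^sub>R v)) (at s)" by (auto intro!: derivative_eq_intros)
  hence "((\<lambda>t. g (a + t *\<^sub>R v)) has_derivative (\<lambda>h. ?G (h *\<^sub>R v))) (at s)"
    by (rule has_derivative_compose[where f="\<lambda>t. a + t *\<^sub>R v"]) (rule fdw[OF assms])
  moreover have "(\<lambda>h. ?G (h *\<^sub>R v)) = (\<lambda>h. ?G v * h)"
    using bounded_linear.linear[OF lin] by (auto simp: linear_iff mult.commute)
  ultimately show ?thesis by (simp add: has_field_derivative_def)
qed

lemma pd_fd: "g differentiable (at z) \<Longrightarrow> pd v g z = frechet_derivative g (at z) v"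
  unfolding pd_def using dir_deriv[of g z 0 v] by (simp add: DERIV_imp_deriv)

lemma px4_pd: "px4 g = pd (1,0,0,0) g"
proof
  fix z :: R4
  obtain x u p q where z: "z = (x,u,p,q)" by (cases z) auto
  have "px4 g z = deriv ((\<lambda>t. g (t,u,p,q)) \<circ> (\<lambda>t. x + t)) 0"
    unfolding z px4_def by (simp add: deriv_shift_0[symmetric])
  also have "((\<lambda>t. g (t,u,p,q)) \<circ> (\<lambda>t. x + t)) = (\<lambda>t. g (z + t *\<^sub>R (1,0,0,0)))"
    by (auto simp: z)
  finally show "px4 g z = pd (1,0,0,0) g z" by (simp add: pd_def)
qed

lemma pu4_pd: "pu4 g = pd (0,1,0,0) g"
proof
  fix z :: R4
  obtain x u p q where z: "z = (x,u,p,q)" by (cases z) auto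
  have "pu4 g z = deriv ((\<lambda>t. g (x,t,p,q)) \<circ> (\<lambda>t. u + t)) 0"
    unfolding z pu4_def by (simp add: deriv_shift_0[symmetric])
  also have "((\<lambda>t. g (x,t,p,q)) \<circ> (\<lambda>t. u + t)) = (\<lambda>t. g (z + t *\<^sub>R (0,1,0,0)))"
    by (auto simp: z)
  finally show "pu4 g z = pd (0,1,0,0) g z" by (simp add: pd_def)
qed

lemma pp4_pd: "pp4 g = pd (0,0,1,0) g"
proof
  fix z :: R4
  obtain x u p q where z: "z = (x,u,p,q)" by (cases z) auto
  have "pp4 g z = deriv ((\<lambda>t. g (x,u,t,q)) \<circ> (\<lambda>t. p + t)) 0"
    unfolding z pp4_def by (simp add: deriv_shift_0[symmetric])
  also have "((\<lambda>t. g (x,u,t,q)) \<circ> (\<lambda>t. p + t)) = (\<lambda>t. g (z + t *\<^sub>R (0,0,1,0)))"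
    by (auto simp: z)
  finally show "pp4 g z = pd (0,0,1,0) g z" by (simp add: pd_def)
qed

lemma pq4_pd: "pq4 g = pd (0,0,0,1) g"
proof
  fix z :: R4
  obtain x u p q where z: "z = (x,u,p,q)" by (cases z) auto
  have "pq4 g z = deriv ((\<lambda>t. g (x,u,p,t)) \<circ> (\<lambda>t. q + t)) 0"
    unfolding z pq4_def by (simp add: deriv_shift_0[symmetric])
  also have "((\<lambda>t. g (x,u,p,t)) \<circ> (\<lambda>t. q + t)) = (\<lambda>t. g (z + t *\<^sub>R (0,0,0,1)))"
    by (auto simp: z)
  finally show "pq4 g z = pd (0,0,0,1) g z" by (simp add: pd_def)
qed

lemma pd_cong:
  assumes "open U" "z \<in> U" "\<forall>y\<in>U. g y = h y"
  shows "pd v g z = pd v h z"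
proof -
  have o: "open ((\<lambda>t::real. z + t *\<^sub>R v) -` U)"
    by (rule open_vimage[OF assms(1)]) (intro continuous_intros)
  have "eventually (\<lambda>t. g (z + t *\<^sub>R v) = h (z + t *\<^sub>R v)) (nhds 0)"
    unfolding eventually_nhds using o assms(2,3) by (intro exI[of _ "(\<lambda>t::real. z + t *\<^sub>R v) -` U"]) auto
  then show ?thesis unfolding pd_def by (rule deriv_cong_ev) simp
qed

lemma pd_add: "g differentiable (at z) \<Longrightarrow> h differentiable (at z) \<Longrightarrow>
  pd v (\<lambda>z. g z + h z) z = pd v g z + pd v h z"
  by (simp add: pd_fd fd_eval[OF has_derivative_add[OF fdw fdw]])

lemma pd_diff: "g differentiable (at z) \<Longrightarrow> h differentiable (at z) \<Longrightarrow>
  pd v (\<lambda>z. g z - h z) z = pd v g z - pd v h z"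
  by (simp add: pd_fd fd_eval[OF has_derivative_diff[OF fdw fdw]])

lemma pd_minus: "g differentiable (at z) \<Longrightarrow> pd v (\<lambda>z. - g z) z = - pd v g z"
  by (simp add: pd_fd fd_eval[OF has_derivative_minus[OF fdw]])

lemma pd_mult: "g differentiable (at z) \<Longrightarrow> h differentiable (at z) \<Longrightarrow>
  pd v (\<lambda>z. g z * h z) z = g z * pd v h z + pd v g z * h z"
  by (simp add: pd_fd fd_eval[OF has_derivative_mult[OF fdw fdw]])

lemma pd_const: "pd v (\<lambda>z. c) z = 0"
  by (simp add: pd_def)

lemma pd_divide: "g differentiable (at z) \<Longrightarrow> h differentiable (at z) \<Longrightarrow> h z \<noteq> 0 \<Longrightarrow>
  pd v (\<lambda>z. g z / h z) z = (pd v g z * h z - g z * pd v h z) / (h z)^2"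
proof -
  assume a: "g differentiable (at z)" "h differentiable (at z)" "h z \<noteq> 0"
  have d: "((\<lambda>z. g z / h z) has_derivative (\<lambda>x. (frechet_derivative g (at z) x * h z - g z * frechet_derivative h (at z) x) / (h z * h z))) (at z)"
    by (rule has_derivative_divide'[OF fdw fdw]) (use a in auto)
  have "(\<lambda>z. g z / h z) differentiable (at z)" using a by simp
  then have "pd v (\<lambda>z. g z / h z) z = (frechet_derivative g (at z) v * h z - g z * frechet_derivative h (at z) v) / (h z * h z)"
    by (simp only: pd_fd fd_eval[OF d])
  then show ?thesis using a by (simp add: pd_fd power2_eq_square)
qed

lemma pd_power: "g differentiable (at z) \<Longrightarrow>
  pd v (\<lambda>z. g z ^ n) z = of_nat n * g z ^ (n - 1) * pd v g z"
  by (simp add: pd_fd fd_eval[OF has_derivative_power[OF fdw]] mult.commute mult.left_commute)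

lemma pd_comp: "g differentiable (at z) \<Longrightarrow> k differentiable (at (g z)) \<Longrightarrow>
  pd v (\<lambda>z. k (g z)) z = deriv k (g z) * pd v g z"
proof -
  assume a: "g differentiable (at z)" "k differentiable (at (g z))"
  have "((\<lambda>z. k (g z)) has_derivative (\<lambda>x. frechet_derivative k (at (g z)) (frechet_derivative g (at z) x))) (at z)"
    by (rule has_derivative_compose[OF fdw fdw]) (use a in auto)
  moreover have "(\<lambda>z. k (g z)) differentiable (at z)"
    using differentiable_chain_at[OF a] by (simp add: o_def)
  ultimately show ?thesis using a by (simp add: pd_fd fd_eval deriv_fd_real)
qed

lemma pd_lin: "bounded_linear l \<Longrightarrow> pd v l z = l v"
proof -
  assume l: "bounded_linear l"
  then have "(l has_derivative l) (at z)" by (rule bounded_linear_imp_has_derivative)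
  then show ?thesis by (simp add: pd_fd differentiableI fd_eval)
qed

lemma smooth_lin:
  fixes l :: "'a::euclidean_space \<Rightarrow> real"
  assumes "open U" "bounded_linear l" shows "smooth_on U l"
proof (rule smooth_coinduct_gen[where P="\<lambda>h. bounded_linear h \<or> (\<exists>c. h = (\<lambda>_. c))"])
  fix g :: "'a \<Rightarrow> real" assume g: "bounded_linear g \<or> (\<exists>c. g = (\<lambda>_. c))"
  show "(\<forall>z\<in>U. g differentiable (at z)) \<and>
      (\<forall>i\<in>Basis. \<exists>h. ((bounded_linear h \<or> (\<exists>c. h = (\<lambda>_. c))) \<or> smooth_on U h) \<and> (\<forall>z\<in>U. frechet_derivative g (at z) i = h z))"
  proof (cases "bounded_linear g")
    case True
    then have d: "\<And>z. (g has_derivative g) (at z)" by (rule bounded_linear_imp_has_derivative)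
    show ?thesis
    proof (intro conjI ballI)
      show "g differentiable (at z)" for z using d by (rule differentiableI)
      fix i :: 'a assume "i \<in> Basis"
      show "\<exists>h. ((bounded_linear h \<or> (\<exists>c. h = (\<lambda>_. c))) \<or> smooth_on U h) \<and> (\<forall>z\<in>U. frechet_derivative g (at z) i = h z)"
        by (rule exI[of _ "\<lambda>_. g i"]) (auto simp: fd_eval[OF d])
    qed
  next
    case False
    then obtain c where "g = (\<lambda>_. c)" using g by blast
    moreover have "\<And>z. ((\<lambda>_. c) has_derivative (\<lambda>_. 0)) (at z)" by (rule has_derivative_const)
    ultimately show ?thesis by (auto simp: differentiableI fd_eval)
  qed
qed (use assms in auto)


lemma clairaut:
  fixes g :: "'a::euclidean_space \<Rightarrow> real"
  assumes U: "open U" and zU: "z \<in> U"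
    and gd: "\<forall>y\<in>U. g differentiable (at y)"
    and Gvd: "\<forall>y\<in>U. (\<lambda>y. frechet_derivative g (at y) v) differentiable (at y)"
    and Gwd: "\<forall>y\<in>U. (\<lambda>y. frechet_derivative g (at y) w) differentiable (at y)"
    and cv: "continuous (at z) (\<lambda>y. frechet_derivative (\<lambda>y. frechet_derivative g (at y) v) (at y) w)"
    and cw: "continuous (at z) (\<lambda>y. frechet_derivative (\<lambda>y. frechet_derivative g (at y) w) (at y) v)"
  shows "frechet_derivative (\<lambda>y. frechet_derivative g (at y) v) (at z) w =
         frechet_derivative (\<lambda>y. frechet_derivative g (at y) w) (at z) v"
proof (rule ccontr)
  define Gv where "Gv = (\<lambda>y. frechet_derivative g (at y) v)"
  define Gw where "Gw = (\<lambda>y. frechet_derivative g (at y) w)"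
  define Mvw where "Mvw = (\<lambda>y. frechet_derivative Gv (at y) w)"
  define Mwv where "Mwv = (\<lambda>y. frechet_derivative Gw (at y) v)"
  assume "\<not> ?thesis"
  hence ne: "Mvw z \<noteq> Mwv z" by (simp add: Mvw_def Mwv_def Gv_def Gw_def)
  define e where "e = \<bar>Mvw z - Mwv z\<bar> / 2"
  have e: "e > 0" using ne by (simp add: e_def)
  obtain d1 where d1: "d1 > 0" "\<And>y. dist y z < d1 \<Longrightarrow> dist (Mvw y) (Mvw z) < e"
    using cv e unfolding continuous_at_eps_delta Mvw_def Gv_def by blast
  obtain d2 where d2: "d2 > 0" "\<And>y. dist y z < d2 \<Longrightarrow> dist (Mwv y) (Mwv z) < e"
    using cw e unfolding continuous_at_eps_delta Mwv_def Gw_def by blast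
  obtain r where r: "r > 0" "ball z r \<subseteq> U" using U zU open_contains_ball by blast
  define m where "m = min r (min d1 d2)"
  have m: "m > 0" using r d1 d2 by (simp add: m_def)
  define N where "N = norm v + norm w + 1"
  define h where "h = m / (2 * N)"
  have nvw: "N > 0" unfolding N_def by (simp add: add_nonneg_pos)
  have h: "h > 0" using m nvw by (simp add: h_def)
  have hs: "h * (norm v + norm w) < m"
  proof -
    have "h * (norm v + norm w) \<le> h * N" using h by (simp add: N_def)
    also have "\<dots> = m / 2" using nvw by (simp add: h_def field_simps)
    finally show ?thesis using m by simp
  qed
  define Q where "Q = (\<lambda>s t. z + s *\<^sub>R v + t *\<^sub>R w)"
  have Qd: "dist (Q s t) z < m" if "0 \<le> s" "s \<le> h" "0 \<le> t" "t \<le> h" for s t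
  proof -
    have "dist (Q s t) z = norm (s *\<^sub>R v + t *\<^sub>R w)" by (simp add: Q_def dist_norm)
    also have "\<dots> \<le> s * norm v + t * norm w"
      using that by (metis (no_types, lifting) abs_of_nonneg norm_scaleR norm_triangle_ineq)
    also have "\<dots> \<le> h * norm v + h * norm w"
      using that by (intro add_mono mult_right_mono) auto
    finally show ?thesis using hs by (simp add: distrib_left)
  qed
  have QU: "Q s t \<in> U" if "0 \<le> s" "s \<le> h" "0 \<le> t" "t \<le> h" for s t
    using Qd[OF that] r(2) m_def by (auto simp: dist_commute)
  have Q1: "Q s t = (z + t *\<^sub>R w) + s *\<^sub>R v" for s t by (simp add: Q_def algebra_simps)
  have Q2: "Q s t = (z + s *\<^sub>R v) + t *\<^sub>R w" for s t by (simp add: Q_def)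
  have ds: "((\<lambda>s. F (Q s t)) has_real_derivative frechet_derivative F (at (Q s t)) v) (at s)"
    if "F differentiable (at (Q s t))" for F s t
    using dir_deriv[of F "z + t *\<^sub>R w" s v] that unfolding Q1 by simp
  have dt: "((\<lambda>t. F (Q s t)) has_real_derivative frechet_derivative F (at (Q s t)) w) (at t)"
    if "F differentiable (at (Q s t))" for F s t
    using dir_deriv[of F "z + s *\<^sub>R v" t w] that unfolding Q2 by simp
  obtain \<xi> where \<xi>: "0 < \<xi>" "\<xi> < h"
    "(g (Q h h) - g (Q h 0)) - (g (Q 0 h) - g (Q 0 0)) = (h - 0) * (Gv (Q \<xi> h) - Gv (Q \<xi> 0))"
  proof -
    have "\<exists>x. 0 < x \<and> x < h \<and> ((\<lambda>s. g (Q s h) - g (Q s 0)) h - (\<lambda>s. g (Q s h) - g (Q s 0)) 0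
       = (h - 0) * (Gv (Q x h) - Gv (Q x 0)))"
    proof (rule MVT2[OF h])
      fix s assume "0 \<le> s" "s \<le> h"
      then show "((\<lambda>s. g (Q s h) - g (Q s 0)) has_real_derivative Gv (Q s h) - Gv (Q s 0)) (at s)"
        unfolding Gv_def using gd QU h by (intro DERIV_diff ds) auto
    qed
    then show ?thesis using that by auto
  qed
  obtain \<tau> where \<tau>: "0 < \<tau>" "\<tau> < h" "Gv (Q \<xi> h) - Gv (Q \<xi> 0) = (h - 0) * Mvw (Q \<xi> \<tau>)"
  proof -
    have "\<exists>x. 0 < x \<and> x < h \<and> Gv (Q \<xi> h) - Gv (Q \<xi> 0) = (h - 0) * Mvw (Q \<xi> x)"
    proof (rule MVT2[OF h])
      fix t assume "0 \<le> t" "t \<le> h"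
      then show "((\<lambda>t. Gv (Q \<xi> t)) has_real_derivative Mvw (Q \<xi> t)) (at t)"
        unfolding Mvw_def using Gvd QU \<xi> by (intro dt) (auto simp: Gv_def)
    qed
    then show ?thesis using that by auto
  qed
  obtain \<tau>' where \<tau>': "0 < \<tau>'" "\<tau>' < h"
    "(g (Q h h) - g (Q 0 h)) - (g (Q h 0) - g (Q 0 0)) = (h - 0) * (Gw (Q h \<tau>') - Gw (Q 0 \<tau>'))"
  proof -
    have "\<exists>x. 0 < x \<and> x < h \<and> ((\<lambda>t. g (Q h t) - g (Q 0 t)) h - (\<lambda>t. g (Q h t) - g (Q 0 t)) 0
       = (h - 0) * (Gw (Q h x) - Gw (Q 0 x)))"
    proof (rule MVT2[OF h])
      fix t assume "0 \<le> t" "t \<le> h"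
      then show "((\<lambda>t. g (Q h t) - g (Q 0 t)) has_real_derivative Gw (Q h t) - Gw (Q 0 t)) (at t)"
        unfolding Gw_def using gd QU h by (intro DERIV_diff dt) auto
    qed
    then show ?thesis using that by auto
  qed
  obtain \<xi>' where \<xi>': "0 < \<xi>'" "\<xi>' < h" "Gw (Q h \<tau>') - Gw (Q 0 \<tau>') = (h - 0) * Mwv (Q \<xi>' \<tau>')"
  proof -
    have "\<exists>x. 0 < x \<and> x < h \<and> Gw (Q h \<tau>') - Gw (Q 0 \<tau>') = (h - 0) * Mwv (Q x \<tau>')"
    proof (rule MVT2[OF h])
      fix s assume "0 \<le> s" "s \<le> h"
      then show "((\<lambda>s. Gw (Q s \<tau>')) has_real_derivative Mwv (Q s \<tau>')) (at s)"
        unfolding Mwv_def using Gwd QU \<tau>' by (intro ds) (auto simp: Gw_def)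
    qed
    then show ?thesis using that by auto
  qed
  have "h * h * Mvw (Q \<xi> \<tau>) = h * h * Mwv (Q \<xi>' \<tau>')"
    using \<xi>(3) \<tau>(3) \<tau>'(3) \<xi>'(3) by (simp add: algebra_simps)
  then have eqM: "Mvw (Q \<xi> \<tau>) = Mwv (Q \<xi>' \<tau>')" using h by simp
  have "dist (Q \<xi> \<tau>) z < d1" using Qd[of \<xi> \<tau>] \<xi> \<tau> m_def by auto
  then have a1: "dist (Mvw (Q \<xi> \<tau>)) (Mvw z) < e" by (rule d1(2))
  have "dist (Q \<xi>' \<tau>') z < d2" using Qd[of \<xi>' \<tau>'] \<xi>' \<tau>' m_def by auto
  then have a2: "dist (Mwv (Q \<xi>' \<tau>')) (Mwv z) < e" by (rule d2(2))
  have "\<bar>Mvw z - Mwv z\<bar> < 2 * e" using a1 a2 eqM by (simp add: dist_real_def)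
  then show False by (simp add: e_def)
qed

lemma smooth_pd:
  assumes "open U" "smooth_on U g" "v \<in> Basis"
  shows "smooth_on U (pd v g)"
  using smooth_cong[OF assms(1) smooth_fd[OF assms(2,3)]] pd_fd smooth_diff[OF assms(2)] by metis

lemma smooth_schwarz:
  assumes U: "open U" and g: "smooth_on U g" and z: "z \<in> U" and v: "v \<in> Basis" and w: "w \<in> Basis"
  shows "pd w (pd v g) z = pd v (pd w g) z"
proof -
  define Gv where "Gv = (\<lambda>y. frechet_derivative g (at y) v)"
  define Gw where "Gw = (\<lambda>y. frechet_derivative g (at y) w)"
  have sv: "smooth_on U Gv" unfolding Gv_def using smooth_fd[OF g v] .
  have sw: "smooth_on U Gw" unfolding Gw_def using smooth_fd[OF g w] .
  have e1: "pd w (pd v g) z = pd w Gv z"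
    by (rule pd_cong[OF U z]) (use pd_fd smooth_diff[OF g] in \<open>auto simp: Gv_def\<close>)
  have e2: "pd v (pd w g) z = pd v Gw z"
    by (rule pd_cong[OF U z]) (use pd_fd smooth_diff[OF g] in \<open>auto simp: Gw_def\<close>)
  have c1: "continuous (at z) (\<lambda>y. frechet_derivative Gv (at y) w)"
    using smooth_diff[OF smooth_fd[OF sv w] z] differentiable_imp_continuous_within by blast
  have c2: "continuous (at z) (\<lambda>y. frechet_derivative Gw (at y) v)"
    using smooth_diff[OF smooth_fd[OF sw v] z] differentiable_imp_continuous_within by blast
  have "frechet_derivative Gv (at z) w = frechet_derivative Gw (at z) v"
    unfolding Gv_def Gw_def
    by (rule clairaut[OF U z]) (use smooth_diff[OF g] smooth_diff[OF sv] smooth_diff[OF sw] c1 c2 in \<open>auto simp: Gv_def Gw_def\<close>)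
  moreover have "pd w Gv z = frechet_derivative Gv (at z) w" by (rule pd_fd) (rule smooth_diff[OF sv z])
  moreover have "pd v Gw z = frechet_derivative Gw (at z) v" by (rule pd_fd) (rule smooth_diff[OF sw z])
  ultimately show ?thesis using e1 e2 by simp
qed


abbreviation "e1 \<equiv> (1::real,0::real,0::real,0::real)"
abbreviation "e2 \<equiv> (0::real,1::real,0::real,0::real)"
abbreviation "e3 \<equiv> (0::real,0::real,1::real,0::real)"
abbreviation "e4 \<equiv> (0::real,0::real,0::real,1::real)"

lemma e_Basis: "e1 \<in> Basis" "e2 \<in> Basis" "e3 \<in> Basis" "e4 \<in> Basis"
  by (simp_all add: Basis_prod_def zero_prod_def)

definition pco :: "R4 \<Rightarrow> real" where "pco z = fst (snd (snd z))"
definition qco :: "R4 \<Rightarrow> real" where "qco z = snd (snd (snd z))"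

lemma bl_pco: "bounded_linear pco"
  unfolding pco_def by (intro bounded_linear_compose[OF bounded_linear_fst] bounded_linear_compose[OF bounded_linear_snd] bounded_linear_snd)
lemma bl_qco: "bounded_linear qco"
  unfolding qco_def by (intro bounded_linear_compose[OF bounded_linear_snd] bounded_linear_snd)

lemma pco_diff[simp]: "pco differentiable (at z)"
  using bl_pco bounded_linear_imp_differentiable by blast
lemma qco_diff[simp]: "qco differentiable (at z)"
  using bl_qco bounded_linear_imp_differentiable by blast

lemma pd_pco: "pd v pco z = pco v" by (rule pd_lin[OF bl_pco])
lemma pd_qco: "pd v qco z = qco v" by (rule pd_lin[OF bl_qco])

lemma Dhat_pd: "Dhat f g z = pd e1 g z + pco z * pd e2 g z + qco z * pd e3 g z + f z * pd e4 g z"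
  by (cases z) (simp add: Dhat_def px4_pd pu4_pd pp4_pd pq4_pd pco_def qco_def)

lemma Dhat_fun: "Dhat f g = (\<lambda>z. pd e1 g z + pco z * pd e2 g z + qco z * pd e3 g z + f z * pd e4 g z)"
  using Dhat_pd by blast

lemma lift3_eq: "lift3 g = (\<lambda>z. g (fst z, fst (snd z), fst (snd (snd z))))"
  by (auto simp: lift3_def)

lemma lift3_pd4: "pd e4 (lift3 g) z = 0"
  by (simp add: pd_def lift3_eq)

lemma lift3_px: "px4 (lift3 g) z = lift3 (px3 g) z"
  by (cases z) (simp add: px4_def px3_def lift3_def)
lemma lift3_pu: "pu4 (lift3 g) z = lift3 (pu3 g) z"
  by (cases z) (simp add: pu4_def pu3_def lift3_def)
lemma lift3_pp: "pp4 (lift3 g) z = lift3 (pp3 g) z"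
  by (cases z) (simp add: pp4_def pp3_def lift3_def)

lemma smooth_lift3:
  assumes W: "open W" and V: "open V" and WV: "\<forall>x u p q. (x,u,p,q) \<in> W \<longrightarrow> (x,u,p) \<in> V"
    and g: "smooth_on V g"
  shows "smooth_on W (lift3 g)"
proof (rule smooth_coinduct_gen[where P="\<lambda>h. \<exists>g. smooth_on V g \<and> h = lift3 g"])
  define \<pi> where "\<pi> = (\<lambda>z::R4. (fst z, fst (snd z), fst (snd (snd z))))"
  have bl: "bounded_linear \<pi>" unfolding \<pi>_def
    by (intro bounded_linear_Pair bounded_linear_fst bounded_linear_compose[OF bounded_linear_fst]
       bounded_linear_compose[OF bounded_linear_snd] bounded_linear_snd)
  have piV: "\<pi> z \<in> V" if "z \<in> W" for z using WV that by (cases z) (auto simp: \<pi>_def)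
  fix h assume "\<exists>g. smooth_on V g \<and> h = lift3 g"
  then obtain g where g: "smooth_on V g" "h = lift3 g" by blast
  have hpi: "h = (\<lambda>z. g (\<pi> z))" using g(2) by (simp add: lift3_eq \<pi>_def)
  have der: "(h has_derivative (\<lambda>x. frechet_derivative g (at (\<pi> z)) (\<pi> x))) (at z)" if "z \<in> W" for z
    unfolding hpi
    by (rule has_derivative_compose[OF bounded_linear_imp_has_derivative[OF bl] fdw])
       (rule smooth_diff[OF g(1) piV[OF that]])
  show "(\<forall>z\<in>W. h differentiable (at z)) \<and>
      (\<forall>i\<in>Basis. \<exists>h'. ((\<exists>g. smooth_on V g \<and> h' = lift3 g) \<or> smooth_on W h') \<and> (\<forall>z\<in>W. frechet_derivative h (at z) i = h' z))"
  proof (intro conjI ballI)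
    show "h differentiable (at z)" if "z \<in> W" for z using der[OF that] by (rule differentiableI)
    fix i :: R4 assume i: "i \<in> Basis"
    have fdh: "frechet_derivative h (at z) i = frechet_derivative g (at (\<pi> z)) (\<pi> i)" if "z \<in> W" for z
      using fd_eval[OF der[OF that]] .
    show "\<exists>h'. ((\<exists>g. smooth_on V g \<and> h' = lift3 g) \<or> smooth_on W h') \<and> (\<forall>z\<in>W. frechet_derivative h (at z) i = h' z)"
    proof (cases "\<pi> i \<in> Basis")
      case True
      show ?thesis
        by (rule exI[of _ "lift3 (\<lambda>y. frechet_derivative g (at y) (\<pi> i))"])
           (use smooth_fd[OF g(1) True] fdh in \<open>auto simp: lift3_eq \<pi>_def\<close>)
    next
      case False
      then have "\<pi> i = 0" using i by (auto simp: Basis_prod_def \<pi>_def zero_prod_def)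
      then have "frechet_derivative g (at y) (\<pi> i) = 0" if "y \<in> V" for y
        using smooth_diff[OF g(1) that] fdw has_derivative_bounded_linear linear_simps(3)
        by (metis bounded_linear.linear)
      then show ?thesis
        by (intro exI[of _ "\<lambda>_. 0"]) (use smooth_const[OF W] fdh piV in \<open>auto\<close>)
    qed
  qed
qed (use W g in auto)


lemma Dhat_add: "g differentiable (at z) \<Longrightarrow> h differentiable (at z) \<Longrightarrow>
  Dhat f (\<lambda>z. g z + h z) z = Dhat f g z + Dhat f h z"
  by (simp add: Dhat_pd pd_add algebra_simps)
lemma Dhat_diff: "g differentiable (at z) \<Longrightarrow> h differentiable (at z) \<Longrightarrow>
  Dhat f (\<lambda>z. g z - h z) z = Dhat f g z - Dhat f h z"
  by (simp add: Dhat_pd pd_diff algebra_simps)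
lemma Dhat_minus: "g differentiable (at z) \<Longrightarrow> Dhat f (\<lambda>z. - g z) z = - Dhat f g z"
  by (simp add: Dhat_pd pd_minus algebra_simps)
lemma Dhat_mult: "g differentiable (at z) \<Longrightarrow> h differentiable (at z) \<Longrightarrow>
  Dhat f (\<lambda>z. g z * h z) z = g z * Dhat f h z + Dhat f g z * h z"
  by (simp add: Dhat_pd pd_mult algebra_simps)
lemma Dhat_divide: "g differentiable (at z) \<Longrightarrow> h differentiable (at z) \<Longrightarrow> h z \<noteq> 0 \<Longrightarrow>
  Dhat f (\<lambda>z. g z / h z) z = (Dhat f g z * h z - g z * Dhat f h z) / (h z)^2"
  by (simp add: Dhat_pd pd_divide add_divide_distrib diff_divide_distrib algebra_simps)
lemma Dhat_power: "g differentiable (at z) \<Longrightarrow>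
  Dhat f (\<lambda>z. g z ^ n) z = of_nat n * g z ^ (n - 1) * Dhat f g z"
  by (simp add: Dhat_pd pd_power algebra_simps)
lemma Dhat_const: "Dhat f (\<lambda>z. c) z = 0"
  by (simp add: Dhat_pd pd_const)
lemma Dhat_comp: "g differentiable (at z) \<Longrightarrow> k differentiable (at (g z)) \<Longrightarrow>
  Dhat f (\<lambda>z. k (g z)) z = deriv k (g z) * Dhat f g z"
proof -
  assume a: "g differentiable (at z)" "k differentiable (at (g z))"
  show ?thesis
    unfolding Dhat_pd pd_comp[OF a, of e1] pd_comp[OF a, of e2] pd_comp[OF a, of e3] pd_comp[OF a, of e4]
    by (simp only: distrib_left mult.left_commute)
qed
lemma Dhat_cong: "open U \<Longrightarrow> z \<in> U \<Longrightarrow> \<forall>y\<in>U. g y = h y \<Longrightarrow> Dhat f g z = Dhat f h z"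
proof -
  assume a: "open U" "z \<in> U" "\<forall>y\<in>U. g y = h y"
  show ?thesis unfolding Dhat_pd pd_cong[OF a, of e1] pd_cong[OF a, of e2] pd_cong[OF a, of e3] pd_cong[OF a, of e4] ..
qed

lemma smooth_Dhat:
  assumes W: "open W" and f: "smooth_on W f" and g: "smooth_on W g"
  shows "smooth_on W (Dhat f g)"
proof -
  have a: "sm W (pd e g)" if "e \<in> Basis" for e using sm.sm_base[OF smooth_pd[OF W g that]] .
  have p: "sm W pco" using sm.sm_base[OF smooth_lin[OF W bl_pco]] .
  have q: "sm W qco" using sm.sm_base[OF smooth_lin[OF W bl_qco]] .
  have ff: "sm W f" using sm.sm_base[OF f] .
  have "sm W (\<lambda>z. pd e1 g z + pco z * pd e2 g z + qco z * pd e3 g z + f z * pd e4 g z)"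
    by (rule sm.sm_add[OF sm.sm_add[OF sm.sm_add[OF a[OF e_Basis(1)] sm.sm_mul[OF p a[OF e_Basis(2)]]]
         sm.sm_mul[OF q a[OF e_Basis(3)]]] sm.sm_mul[OF ff a[OF e_Basis(4)]]])
  then show ?thesis unfolding Dhat_fun by (rule sm_smooth[OF W])
qed

context
  fixes W :: "R4 set" and f g :: "R4 \<Rightarrow> real" and z :: R4
  assumes W: "open W" and f: "smooth_on W f" and g: "smooth_on W g" and z: "z \<in> W"
begin

lemma comm_aux:
  shows "pd v (Dhat f g) z = pd v (pd e1 g) z + pco z * pd v (pd e2 g) z + pco v * pd e2 g z
     + qco z * pd v (pd e3 g) z + qco v * pd e3 g z + f z * pd v (pd e4 g) z + pd v f z * pd e4 g z"
proof -
  have d: "pd e g differentiable (at z)" if "e \<in> Basis" for e using smooth_diff[OF smooth_pd[OF W g that] z] .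
  note dd = d[OF e_Basis(1)] d[OF e_Basis(2)] d[OF e_Basis(3)] d[OF e_Basis(4)]
  have fd: "f differentiable (at z)" using smooth_diff[OF f z] .
  have s1: "pd v (\<lambda>y. pd e1 g y + pco y * pd e2 g y + qco y * pd e3 g y + f y * pd e4 g y) z
     = pd v (\<lambda>y. pd e1 g y + pco y * pd e2 g y + qco y * pd e3 g y) z + pd v (\<lambda>y. f y * pd e4 g y) z"
    by (rule pd_add) (intro differentiable_add differentiable_mult dd fd pco_diff qco_diff)+
  have s2: "pd v (\<lambda>y. pd e1 g y + pco y * pd e2 g y + qco y * pd e3 g y) z
     = pd v (\<lambda>y. pd e1 g y + pco y * pd e2 g y) z + pd v (\<lambda>y. qco y * pd e3 g y) z"
    by (rule pd_add) (intro differentiable_add differentiable_mult dd fd pco_diff qco_diff)+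
  have s3: "pd v (\<lambda>y. pd e1 g y + pco y * pd e2 g y) z
     = pd v (pd e1 g) z + pd v (\<lambda>y. pco y * pd e2 g y) z"
    by (rule pd_add) (intro differentiable_add differentiable_mult dd fd pco_diff qco_diff)+
  have m1: "pd v (\<lambda>y. pco y * pd e2 g y) z = pco z * pd v (pd e2 g) z + pd v pco z * pd e2 g z"
    by (rule pd_mult) (intro differentiable_add differentiable_mult dd fd pco_diff qco_diff)+
  have m2: "pd v (\<lambda>y. qco y * pd e3 g y) z = qco z * pd v (pd e3 g) z + pd v qco z * pd e3 g z"
    by (rule pd_mult) (intro differentiable_add differentiable_mult dd fd pco_diff qco_diff)+
  have m3: "pd v (\<lambda>y. f y * pd e4 g y) z = f z * pd v (pd e4 g) z + pd v f z * pd e4 g z"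
    by (rule pd_mult) (intro differentiable_add differentiable_mult dd fd pco_diff qco_diff)+
  have X: "pd v (Dhat f g) z = pd v (pd e1 g) z + (pco z * pd v (pd e2 g) z + pd v pco z * pd e2 g z)
     + (qco z * pd v (pd e3 g) z + pd v qco z * pd e3 g z) + (f z * pd v (pd e4 g) z + pd v f z * pd e4 g z)"
    by (simp only: Dhat_fun s1 s2 s3 m1 m2 m3)
  show ?thesis using X unfolding pd_pco pd_qco by linarith
qed

lemma comm_q: "pd e4 (Dhat f g) z = Dhat f (pd e4 g) z + pd e3 g z + pd e4 f z * pd e4 g z"
  unfolding comm_aux Dhat_pd using smooth_schwarz[OF W g z] e_Basis
  by (simp add: pco_def qco_def algebra_simps)

lemma comm_p: "pd e3 (Dhat f g) z = Dhat f (pd e3 g) z + pd e2 g z + pd e3 f z * pd e4 g z"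
  unfolding comm_aux Dhat_pd using smooth_schwarz[OF W g z] e_Basis
  by (simp add: pco_def qco_def algebra_simps)

lemma comm_u: "pd e2 (Dhat f g) z = Dhat f (pd e2 g) z + pd e2 f z * pd e4 g z"
  unfolding comm_aux Dhat_pd using smooth_schwarz[OF W g z] e_Basis
  by (simp add: pco_def qco_def algebra_simps)

end


locale eqctx =
  fixes f :: "R4 \<Rightarrow> real" and W :: "R4 set"
    and Phi Psi Chi La Al Be Bb A1 A2 Et :: "R4 \<Rightarrow> real"
    and abar :: "real \<Rightarrow> real" and T :: "real set"
  assumes W: "open W" and sf: "smooth_on W f"
    and sPhi: "smooth_on W Phi" and sPsi: "smooth_on W Psi" and sChi: "smooth_on W Chi"
    and sLa: "smooth_on W La" and sAl: "smooth_on W Al" and sBe: "smooth_on W Be"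
    and PhiAl: "pd e3 Phi = Al" and PhiBe: "pd e2 Phi = Be"
    and q0: "\<And>z. pd e4 Phi z = 0" "\<And>z. pd e4 Psi z = 0" "\<And>z. pd e4 Chi z = 0"
      "\<And>z. pd e4 La z = 0" "\<And>z. pd e4 Al z = 0" "\<And>z. pd e4 Be z = 0"
      "\<And>z. pd e4 Bb z = 0" "\<And>z. pd e4 A1 z = 0" "\<And>z. pd e4 A2 z = 0"
    and ct1: "\<forall>z\<in>W. pd e1 Psi z = Chi z * pd e1 Phi z - pco z * La z"
    and ct2: "\<forall>z\<in>W. pd e2 Psi z = Chi z * Be z + La z"
    and ct3: "\<forall>z\<in>W. pd e3 Psi z = Chi z * Al z"
    and La_nz: "\<forall>z\<in>W. La z \<noteq> 0" and D0_nz: "\<forall>z\<in>W. Dhat f Phi z \<noteq> 0" and Bb_nz: "\<forall>z\<in>W. Bb z \<noteq> 0"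
    and T: "open T" and sabar: "smooth_on T abar" and PhiT: "\<forall>z\<in>W. Phi z \<in> T"
    and Bb: "\<And>z. Bb z = abar (Phi z)" and A1: "\<And>z. A1 z = deriv abar (Phi z)"
    and A2: "\<And>z. A2 z = deriv (deriv abar) (Phi z)"
    and Et: "\<And>z. Et z = Dhat f Chi z / Dhat f Phi z"
    and eqv: "\<forall>z\<in>W. Dhat f Et z = Bb z ^ 3 * Psi z * Dhat f Phi z"
begin

abbreviation "D0 \<equiv> Dhat f Phi"
abbreviation "DC \<equiv> Dhat f Chi"
abbreviation "Fb \<equiv> (\<lambda>z. Bb z ^ 3 * Psi z)"
abbreviation "L1 \<equiv> Dhat f La"
abbreviation "L2 \<equiv> Dhat f L1"
abbreviation "L3 \<equiv> Dhat f L2"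
abbreviation "d1 \<equiv> Dhat f D0"
abbreviation "d2 \<equiv> Dhat f d1"
abbreviation "d3 \<equiv> Dhat f d2"
abbreviation "Al1 \<equiv> Dhat f Al"
abbreviation "Be1 \<equiv> Dhat f Be"

lemma sD: "smooth_on W g \<Longrightarrow> smooth_on W (Dhat f g)" by (rule smooth_Dhat[OF W sf])

lemma sD0: "smooth_on W D0" by (rule sD[OF sPhi])
lemma sDC: "smooth_on W DC" by (rule sD[OF sChi])
lemma sL1: "smooth_on W L1" by (rule sD[OF sLa])
lemma sL2: "smooth_on W L2" by (rule sD[OF sL1])
lemma sL3: "smooth_on W L3" by (rule sD[OF sL2])
lemma sd1: "smooth_on W d1" by (rule sD[OF sD0])
lemma sd2: "smooth_on W d2" by (rule sD[OF sd1])
lemma sd3: "smooth_on W d3" by (rule sD[OF sd2])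
lemma sAl1: "smooth_on W Al1" by (rule sD[OF sAl])
lemma sBe1: "smooth_on W Be1" by (rule sD[OF sBe])

lemma sEta: "smooth_on W Et"
proof -
  have "sm W (\<lambda>z. DC z * inverse (D0 z))"
    by (rule sm.sm_mul[OF sm.sm_base[OF sDC] sm.sm_inv[OF sm.sm_base[OF sD0] D0_nz]])
  then have "smooth_on W (\<lambda>z. DC z * inverse (D0 z))" by (rule sm_smooth[OF W])
  then show ?thesis by (rule smooth_cong[OF W]) (simp add: divide_inverse Et)
qed

lemma sA: "smooth_on T (deriv abar)" "smooth_on T (deriv (deriv abar))"
  using smooth_deriv[OF T sabar] smooth_deriv[OF T smooth_deriv[OF T sabar]] by auto

lemma sBb: "smooth_on W Bb"
proof -
  have e: "Bb = (\<lambda>z. abar (Phi z))" by (rule ext) (rule Bb)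
  have "sm W (\<lambda>z. abar (Phi z))" by (rule sm.sm_comp[OF sabar T sm.sm_base[OF sPhi] PhiT])
  then show ?thesis unfolding e by (rule sm_smooth[OF W])
qed

lemma sA1: "smooth_on W A1"
proof -
  have e: "A1 = (\<lambda>z. deriv abar (Phi z))" by (rule ext) (rule A1)
  have "sm W (\<lambda>z. deriv abar (Phi z))" by (rule sm.sm_comp[OF sA(1) T sm.sm_base[OF sPhi] PhiT])
  then show ?thesis unfolding e by (rule sm_smooth[OF W])
qed

lemma sA2: "smooth_on W A2"
proof -
  have e: "A2 = (\<lambda>z. deriv (deriv abar) (Phi z))" by (rule ext) (rule A2)
  have "sm W (\<lambda>z. deriv (deriv abar) (Phi z))" by (rule sm.sm_comp[OF sA(2) T sm.sm_base[OF sPhi] PhiT])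
  then show ?thesis unfolding e by (rule sm_smooth[OF W])
qed

lemma dz:
  assumes z: "z \<in> W"
  shows "f differentiable (at z)" "Phi differentiable (at z)" "Psi differentiable (at z)"
    "Chi differentiable (at z)" "La differentiable (at z)" "Al differentiable (at z)" "Be differentiable (at z)"
    "Bb differentiable (at z)" "A1 differentiable (at z)" "A2 differentiable (at z)"
    "D0 differentiable (at z)" "DC differentiable (at z)" "L1 differentiable (at z)" "L2 differentiable (at z)"
    "L3 differentiable (at z)" "d1 differentiable (at z)" "d2 differentiable (at z)" "d3 differentiable (at z)"
    "Al1 differentiable (at z)" "Be1 differentiable (at z)" "Et differentiable (at z)"
  using smooth_diff[OF sf z] smooth_diff[OF sPhi z] smooth_diff[OF sPsi z] smooth_diff[OF sChi z]
    smooth_diff[OF sLa z] smooth_diff[OF sAl z] smooth_diff[OF sBe z] smooth_diff[OF sBb z]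
    smooth_diff[OF sA1 z] smooth_diff[OF sA2 z] smooth_diff[OF sD0 z] smooth_diff[OF sDC z]
    smooth_diff[OF sL1 z] smooth_diff[OF sL2 z] smooth_diff[OF sL3 z] smooth_diff[OF sd1 z]
    smooth_diff[OF sd2 z] smooth_diff[OF sd3 z] smooth_diff[OF sAl1 z] smooth_diff[OF sBe1 z]
    smooth_diff[OF sEta z] by auto

lemma nz: assumes z: "z \<in> W" shows "La z \<noteq> 0" "D0 z \<noteq> 0" "Bb z \<noteq> 0"
  using La_nz D0_nz Bb_nz z by auto

lemma pdz: assumes z: "z \<in> W" and "e \<in> Basis" and "smooth_on W g" shows "pd e g differentiable (at z)"
  using smooth_diff[OF smooth_pd[OF W assms(3,2)] z] .

lemma pco_e[simp]: "pco e1 = 0" "pco e2 = 0" "pco e3 = 1" "pco e4 = 0"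
  by (simp_all add: pco_def)
lemma qco_e[simp]: "qco e1 = 0" "qco e2 = 0" "qco e3 = 0" "qco e4 = 1"
  by (simp_all add: qco_def)

lemma zero_fun: "(\<And>z. g z = 0) \<Longrightarrow> g = (\<lambda>_. 0)" by (rule ext)

lemma commL:
  assumes g: "smooth_on W g" and g0: "\<And>z. pd e4 g z = 0" and z: "z \<in> W"
  shows "pd e4 (Dhat f g) z = pd e3 g z"
    "pd e3 (Dhat f g) z = Dhat f (pd e3 g) z + pd e2 g z"
    "pd e2 (Dhat f g) z = Dhat f (pd e2 g) z"
proof -
  have "pd e4 g = (\<lambda>_. 0)" using g0 by (rule zero_fun)
  then show "pd e4 (Dhat f g) z = pd e3 g z"
    "pd e3 (Dhat f g) z = Dhat f (pd e3 g) z + pd e2 g z"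
    "pd e2 (Dhat f g) z = Dhat f (pd e2 g) z"
    using comm_q[OF W sf g z] comm_p[OF W sf g z] comm_u[OF W sf g z] by (simp_all add: Dhat_const)
qed

lemma K_AlBe: assumes z: "z \<in> W" shows "pd e2 Al z = pd e3 Be z"
  using smooth_schwarz[OF W sPhi z e_Basis(3) e_Basis(2)] unfolding PhiAl PhiBe .

lemma D0_pd: "D0 z = pd e1 Phi z + pco z * Be z + qco z * Al z"
  unfolding Dhat_pd PhiAl[symmetric] PhiBe[symmetric] q0 by simp

lemma DC_pd: "DC z = pd e1 Chi z + pco z * pd e2 Chi z + qco z * pd e3 Chi z"
  unfolding Dhat_pd q0 by simp

lemma C1: "\<forall>y\<in>W. Dhat f Psi y = Chi y * D0 y"
proof
  fix y assume y: "y \<in> W"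
  show "Dhat f Psi y = Chi y * D0 y"
    unfolding Dhat_pd q0 PhiAl PhiBe using ct1[rule_format, OF y] ct2[rule_format, OF y] ct3[rule_format, OF y]
    by (simp add: algebra_simps)
qed

lemma E_up: assumes z: "z \<in> W" shows "pd e3 Chi z * Be z + pd e3 La z = pd e2 Chi z * Al z"
proof -
  have "pd e3 (pd e2 Psi) z = pd e3 (\<lambda>y. Chi y * Be y + La y) z"
    by (rule pd_cong[OF W z]) (use ct2 in auto)
  also have "\<dots> = Chi z * pd e3 Be z + pd e3 Chi z * Be z + pd e3 La z"
    using dz[OF z] by (simp add: pd_add pd_mult)
  finally have 1: "pd e3 (pd e2 Psi) z = Chi z * pd e3 Be z + pd e3 Chi z * Be z + pd e3 La z" .
  have "pd e2 (pd e3 Psi) z = pd e2 (\<lambda>y. Chi y * Al y) z"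
    by (rule pd_cong[OF W z]) (use ct3 in auto)
  also have "\<dots> = Chi z * pd e2 Al z + pd e2 Chi z * Al z"
    using dz[OF z] by (simp add: pd_mult)
  finally have 2: "pd e2 (pd e3 Psi) z = Chi z * pd e2 Al z + pd e2 Chi z * Al z" .
  show ?thesis using smooth_schwarz[OF W sPsi z e_Basis(2) e_Basis(3)] 1 2 K_AlBe[OF z] by simp
qed

lemma E_xp: assumes z: "z \<in> W" shows "pd e3 Chi z * pd e1 Phi z - pco z * pd e3 La z - La z = pd e1 Chi z * Al z"
proof -
  have pe: "pd e1 Phi differentiable (at z)" using pdz[OF z e_Basis(1) sPhi] .
  have "pd e3 (pd e1 Psi) z = pd e3 (\<lambda>y. Chi y * pd e1 Phi y - pco y * La y) z"
    by (rule pd_cong[OF W z]) (use ct1 in auto)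
  also have "\<dots> = Chi z * pd e3 (pd e1 Phi) z + pd e3 Chi z * pd e1 Phi z - (pco z * pd e3 La z + La z)"
    using dz[OF z] pe by (simp add: pd_diff pd_mult pd_pco)
  finally have 1: "pd e3 (pd e1 Psi) z = Chi z * pd e3 (pd e1 Phi) z + pd e3 Chi z * pd e1 Phi z - (pco z * pd e3 La z + La z)" .
  have "pd e1 (pd e3 Psi) z = pd e1 (\<lambda>y. Chi y * Al y) z"
    by (rule pd_cong[OF W z]) (use ct3 in auto)
  also have "\<dots> = Chi z * pd e1 Al z + pd e1 Chi z * Al z"
    using dz[OF z] by (simp add: pd_mult)
  finally have 2: "pd e1 (pd e3 Psi) z = Chi z * pd e1 Al z + pd e1 Chi z * Al z" .
  have 3: "pd e3 (pd e1 Phi) z = pd e1 Al z"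
    using smooth_schwarz[OF W sPhi z e_Basis(1) e_Basis(3)] unfolding PhiAl .
  show ?thesis using smooth_schwarz[OF W sPsi z e_Basis(1) e_Basis(3)] 1 2 3 by simp
qed

lemma chi_p: assumes z: "z \<in> W" shows "pd e3 Chi z * D0 z - Al z * DC z = La z"
  using E_up[OF z] E_xp[OF z] unfolding D0_pd DC_pd by algebra

lemma D0_q: assumes z: "z \<in> W" shows "pd e4 D0 z = Al z"
  using commL(1)[OF sPhi q0(1) z] PhiAl by simp
lemma D0_p: assumes z: "z \<in> W" shows "pd e3 D0 z = Al1 z + Be z"
  using commL(2)[OF sPhi q0(1) z] PhiAl PhiBe by simp
lemma D0_u: assumes z: "z \<in> W" shows "pd e2 D0 z = Be1 z"
  using commL(3)[OF sPhi q0(1) z] PhiBe by simp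

lemma chi_u: assumes z: "z \<in> W" shows "pd e2 Chi z * D0 z = DC z * Be z + L1 z"
proof -
  have "pd e2 (Dhat f Psi) z = pd e2 (\<lambda>y. Chi y * D0 y) z"
    by (rule pd_cong[OF W z]) (use C1 in auto)
  also have "\<dots> = Chi z * Be1 z + pd e2 Chi z * D0 z"
    using dz[OF z] by (simp add: pd_mult D0_u[OF z])
  finally have 1: "pd e2 (Dhat f Psi) z = Chi z * Be1 z + pd e2 Chi z * D0 z" .
  have "Dhat f (pd e2 Psi) z = Dhat f (\<lambda>y. Chi y * Be y + La y) z"
    by (rule Dhat_cong[OF W z]) (use ct2 in auto)
  also have "\<dots> = Chi z * Be1 z + DC z * Be z + L1 z"
    using dz[OF z] by (simp add: Dhat_add Dhat_mult)
  finally have 2: "Dhat f (pd e2 Psi) z = Chi z * Be1 z + DC z * Be z + L1 z" .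
  show ?thesis using commL(3)[OF sPsi q0(2) z] 1 2 by simp
qed

lemma La_p: assumes z: "z \<in> W" shows "pd e3 La z * D0 z = L1 z * Al z - La z * Be z"
proof -
  have "pd e3 La z * D0 z = pd e2 Chi z * D0 z * Al z - pd e3 Chi z * D0 z * Be z"
    using E_up[OF z] by algebra
  also have "\<dots> = L1 z * Al z - La z * Be z"
    using chi_u[OF z] chi_p[OF z] by algebra
  finally show ?thesis .
qed

end


lemma alg_fp:
  fixes a a1 a2 D d1 d2 Al Al1 Be B A P C :: real
  assumes "a \<noteq> 0" "D \<noteq> 0"
  shows "((B ^ 3 * P * (Al1 + Be) + (B ^ 3 * (C * Al) + 3 * B ^ 2 * (A * Al) * P) * D)
   - (Al * (B ^ 3 * (C * D) + 3 * B ^ 2 * (A * D) * P) + Al1 * (B ^ 3 * P)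
      + 2 * (a2 * D ^ 2 - a1 * (2 * D * d1)) / (D ^ 2) ^ 2
      - ((a * d2 + a1 * d1) * D ^ 3 - a * d1 * (3 * D ^ 2 * d1)) / (D ^ 3) ^ 2)
   - (B^3 * P * Be + a2 / D ^ 2 - a1 * d1 / D ^ 3)) * D ^ 2 / a
   = - 3 * a2 / a + 6 * a1 * d1 / (a * D) + d2 / D - 3 * d1 ^ 2 / D ^ 2"
  using assms by (simp add: field_simps) algebra

lemma alg_fu:
  fixes a a1 a2 a3 D d1 d2 Be Be1 B A P C :: real
  assumes "a \<noteq> 0" "D \<noteq> 0"
  shows "((B ^ 3 * P * Be1 + (B ^ 3 * (C * Be + a) + 3 * B ^ 2 * (A * Be) * P) * D)
   - (Be * (B ^ 3 * (C * D) + 3 * B ^ 2 * (A * D) * P) + Be1 * (B ^ 3 * P)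
      + (a3 * D ^ 2 - a2 * (2 * D * d1)) / (D ^ 2) ^ 2
      - ((a1 * d2 + a2 * d1) * D ^ 3 - a1 * d1 * (3 * D ^ 2 * d1)) / (D ^ 3) ^ 2)) * D ^ 2 / a
   = B ^ 3 * D ^ 3 - a3 / a + 3 * a2 * d1 / (a * D) + a1 * d2 / (a * D) - 3 * a1 * d1 ^ 2 / (a * D ^ 2)"
  using assms by (simp add: field_simps) algebra

context eqctx begin


lemma Et_DC: "\<forall>y\<in>W. DC y = Et y * D0 y" using Et nz(2) by simp

lemma eta_q: assumes z: "z \<in> W" shows "pd e4 Et z = La z / D0 z ^ 2"
proof -
  have "pd e4 Et z = pd e4 (\<lambda>y. DC y / D0 y) z" by (rule pd_cong[OF W z]) (simp add: Et)
  also have "\<dots> = (pd e4 DC z * D0 z - DC z * pd e4 D0 z) / D0 z ^ 2"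
    by (rule pd_divide) (use dz[OF z] nz[OF z] in auto)
  also have "\<dots> = La z / D0 z ^ 2"
    using commL(1)[OF sChi q0(3) z] D0_q[OF z] chi_p[OF z] by (simp add: algebra_simps)
  finally show ?thesis .
qed

lemma chi_p': "\<forall>y\<in>W. pd e3 Chi y = Al y * Et y + La y / D0 y"
proof
  fix y assume y: "y \<in> W"
  show "pd e3 Chi y = Al y * Et y + La y / D0 y"
    using chi_p[OF y] nz[OF y] Et[of y] by (simp add: field_simps)
qed

lemma chi_u': "\<forall>y\<in>W. pd e2 Chi y = Et y * Be y + L1 y / D0 y"
proof
  fix y assume y: "y \<in> W"
  show "pd e2 Chi y = Et y * Be y + L1 y / D0 y"
    using chi_u[OF y] nz[OF y] Et[of y] by (simp add: field_simps)
qed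

lemma eta_p: assumes z: "z \<in> W"
  shows "pd e3 Et z = Al z * Fb z + 2 * L1 z / D0 z ^ 2 - La z * d1 z / D0 z ^ 3"
proof -
  have "pd e3 DC z = pd e3 (\<lambda>y. Et y * D0 y) z" by (rule pd_cong[OF W z]) (use Et_DC in auto)
  also have "\<dots> = Et z * (Al1 z + Be z) + pd e3 Et z * D0 z"
    using dz[OF z] by (simp add: pd_mult D0_p[OF z])
  finally have 1: "pd e3 DC z = Et z * (Al1 z + Be z) + pd e3 Et z * D0 z" .
  have "Dhat f (pd e3 Chi) z = Dhat f (\<lambda>y. Al y * Et y + La y / D0 y) z"
    by (rule Dhat_cong[OF W z]) (use chi_p' in auto)
  also have "\<dots> = Al z * Dhat f Et z + Al1 z * Et z + (L1 z * D0 z - La z * d1 z) / D0 z ^ 2"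
    using dz[OF z] nz[OF z] by (simp add: Dhat_add Dhat_mult Dhat_divide)
  finally have 2: "Dhat f (pd e3 Chi) z = Al z * Dhat f Et z + Al1 z * Et z + (L1 z * D0 z - La z * d1 z) / D0 z ^ 2" .
  have 3: "pd e3 DC z = Dhat f (pd e3 Chi) z + pd e2 Chi z" by (rule commL(2)[OF sChi q0(3) z])
  have 4: "pd e2 Chi z = Et z * Be z + L1 z / D0 z" using chi_u' z by auto
  have 5: "Dhat f Et z = Fb z * D0 z" using eqv z by auto
  show ?thesis using 1 2 3 4 5 nz[OF z] by (simp add: field_simps power2_eq_square power3_eq_cube)
qed

lemma eta_u: assumes z: "z \<in> W"
  shows "pd e2 Et z = Fb z * Be z + L2 z / D0 z ^ 2 - L1 z * d1 z / D0 z ^ 3"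
proof -
  have "pd e2 DC z = pd e2 (\<lambda>y. Et y * D0 y) z" by (rule pd_cong[OF W z]) (use Et_DC in auto)
  also have "\<dots> = Et z * Be1 z + pd e2 Et z * D0 z"
    using dz[OF z] by (simp add: pd_mult D0_u[OF z])
  finally have 1: "pd e2 DC z = Et z * Be1 z + pd e2 Et z * D0 z" .
  have "Dhat f (pd e2 Chi) z = Dhat f (\<lambda>y. Et y * Be y + L1 y / D0 y) z"
    by (rule Dhat_cong[OF W z]) (use chi_u' in auto)
  also have "\<dots> = Et z * Be1 z + Dhat f Et z * Be z + (L2 z * D0 z - L1 z * d1 z) / D0 z ^ 2"
    using dz[OF z] nz[OF z] by (simp add: Dhat_add Dhat_mult Dhat_divide)
  finally have 2: "Dhat f (pd e2 Chi) z = Et z * Be1 z + Dhat f Et z * Be z + (L2 z * D0 z - L1 z * d1 z) / D0 z ^ 2" .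
  have 3: "pd e2 DC z = Dhat f (pd e2 Chi) z" by (rule commL(3)[OF sChi q0(3) z])
  have 5: "Dhat f Et z = Fb z * D0 z" using eqv z by auto
  show ?thesis using 1 2 3 5 nz[OF z] by (simp add: field_simps power2_eq_square power3_eq_cube)
qed


lemma abar_d: assumes z: "z \<in> W" shows "abar differentiable (at (Phi z))" "deriv abar differentiable (at (Phi z))"
  using smooth_diff[OF sabar] smooth_diff[OF sA(1)] PhiT z by auto

lemma Bb_fun: "Bb = (\<lambda>z. abar (Phi z))" by (rule ext) (rule Bb)
lemma A1_fun: "A1 = (\<lambda>z. deriv abar (Phi z))" by (rule ext) (rule A1)

lemma Bb_pd: assumes z: "z \<in> W" shows "pd v Bb z = A1 z * pd v Phi z"
  unfolding Bb_fun A1 by (rule pd_comp[OF dz(2)[OF z] abar_d(1)[OF z]])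
lemma A1_pd: assumes z: "z \<in> W" shows "pd v A1 z = A2 z * pd v Phi z"
  unfolding A1_fun A2 by (rule pd_comp[OF dz(2)[OF z] abar_d(2)[OF z]])
lemma Bb_D: assumes z: "z \<in> W" shows "Dhat f Bb z = A1 z * D0 z"
  unfolding Bb_fun A1 by (rule Dhat_comp[OF dz(2)[OF z] abar_d(1)[OF z]])
lemma A1_D: assumes z: "z \<in> W" shows "Dhat f A1 z = A2 z * D0 z"
  unfolding A1_fun A2 by (rule Dhat_comp[OF dz(2)[OF z] abar_d(2)[OF z]])

lemma Psi_D: assumes z: "z \<in> W" shows "Dhat f Psi z = Chi z * D0 z" using C1 z by auto
lemma Et_D: assumes z: "z \<in> W" shows "Dhat f Et z = Bb z ^ 3 * Psi z * D0 z" using eqv z by auto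

lemma f_q: assumes z: "z \<in> W" shows "pd e4 f z = 3 * d1 z / D0 z - 3 * L1 z / La z"
proof -
  have "pd e4 (Dhat f Et) z = pd e4 (\<lambda>y. Bb y ^ 3 * Psi y * D0 y) z" by (rule pd_cong[OF W z]) (use eqv in auto)
  also have "\<dots> = Bb z ^ 3 * Psi z * Al z"
    using dz[OF z] by (simp add: pd_mult pd_power q0 D0_q[OF z])
  finally have 1: "pd e4 (Dhat f Et) z = Bb z ^ 3 * Psi z * Al z" .
  have "Dhat f (pd e4 Et) z = Dhat f (\<lambda>y. La y / D0 y ^ 2) z" by (rule Dhat_cong[OF W z]) (use eta_q in auto)
  also have "\<dots> = (L1 z * D0 z ^ 2 - La z * (2 * D0 z * d1 z)) / (D0 z ^ 2) ^ 2"
    using dz[OF z] nz[OF z] by (simp add: Dhat_divide Dhat_power)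
  finally have 2: "Dhat f (pd e4 Et) z = (L1 z * D0 z ^ 2 - La z * (2 * D0 z * d1 z)) / (D0 z ^ 2) ^ 2" .
  have 3: "pd e4 (Dhat f Et) z = Dhat f (pd e4 Et) z + pd e3 Et z + pd e4 f z * pd e4 Et z"
    by (rule comm_q[OF W sf sEta z])
  have 4: "pd e4 f z * (La z / D0 z ^ 2) = Bb z ^ 3 * Psi z * Al z - (L1 z * D0 z ^ 2 - La z * (2 * D0 z * d1 z)) / (D0 z ^ 2) ^ 2
     - (Al z * Fb z + 2 * L1 z / D0 z ^ 2 - La z * d1 z / D0 z ^ 3)"
    using 1 2 3 eta_p[OF z] eta_q[OF z] by simp
  show ?thesis using 4 nz[OF z] by (simp add: field_simps power2_eq_square power3_eq_cube) algebra
qed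


lemma f_p: assumes z: "z \<in> W"
  shows "pd e3 f z = - 3 * L2 z / La z + 6 * L1 z * d1 z / (La z * D0 z) + d2 z / D0 z - 3 * d1 z ^ 2 / D0 z ^ 2"
proof -
  have "pd e3 (Dhat f Et) z = pd e3 (\<lambda>y. Bb y ^ 3 * Psi y * D0 y) z" by (rule pd_cong[OF W z]) (use eqv in auto)
  also have "\<dots> = Bb z ^ 3 * Psi z * (Al1 z + Be z) + (Bb z ^ 3 * (Chi z * Al z) + 3 * Bb z ^ 2 * (A1 z * Al z) * Psi z) * D0 z"
    using dz[OF z] ct3 z by (simp add: pd_mult pd_power D0_p[OF z] Bb_pd[OF z] PhiAl algebra_simps)
  finally have 1: "pd e3 (Dhat f Et) z = Bb z ^ 3 * Psi z * (Al1 z + Be z) + (Bb z ^ 3 * (Chi z * Al z) + 3 * Bb z ^ 2 * (A1 z * Al z) * Psi z) * D0 z" .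
  have "Dhat f (pd e3 Et) z = Dhat f (\<lambda>y. Al y * (Bb y ^ 3 * Psi y) + 2 * L1 y / D0 y ^ 2 - La y * d1 y / D0 y ^ 3) z"
    by (rule Dhat_cong[OF W z]) (use eta_p in auto)
  also have "\<dots> = Al z * (Bb z ^ 3 * (Chi z * D0 z) + 3 * Bb z ^ 2 * (A1 z * D0 z) * Psi z) + Al1 z * (Bb z ^ 3 * Psi z)
      + 2 * (L2 z * D0 z ^ 2 - L1 z * (2 * D0 z * d1 z)) / (D0 z ^ 2) ^ 2
      - ((La z * d2 z + L1 z * d1 z) * D0 z ^ 3 - La z * d1 z * (3 * D0 z ^ 2 * d1 z)) / (D0 z ^ 3) ^ 2"
    using dz[OF z] nz[OF z] by (simp add: Dhat_add Dhat_diff Dhat_mult Dhat_divide Dhat_power Dhat_const Bb_D[OF z] Psi_D[OF z] algebra_simps)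
  finally have 2: "Dhat f (pd e3 Et) z = Al z * (Bb z ^ 3 * (Chi z * D0 z) + 3 * Bb z ^ 2 * (A1 z * D0 z) * Psi z) + Al1 z * (Bb z ^ 3 * Psi z)
      + 2 * (L2 z * D0 z ^ 2 - L1 z * (2 * D0 z * d1 z)) / (D0 z ^ 2) ^ 2
      - ((La z * d2 z + L1 z * d1 z) * D0 z ^ 3 - La z * d1 z * (3 * D0 z ^ 2 * d1 z)) / (D0 z ^ 3) ^ 2" .
  have 3: "pd e3 (Dhat f Et) z = Dhat f (pd e3 Et) z + pd e2 Et z + pd e3 f z * pd e4 Et z"
    by (rule comm_p[OF W sf sEta z])
  have 4: "pd e3 f z * (La z / D0 z ^ 2) = pd e3 (Dhat f Et) z - Dhat f (pd e3 Et) z - pd e2 Et z"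
    using 3 eta_q[OF z] by simp
  have 5: "pd e3 f z = (pd e3 (Dhat f Et) z - Dhat f (pd e3 Et) z - pd e2 Et z) * D0 z ^ 2 / La z"
    using 4 nz[OF z] by (simp add: field_simps)
  show ?thesis unfolding 5 1 2 eta_u[OF z] by (rule alg_fp[OF nz(1,2)[OF z]])
qed

lemma f_u: assumes z: "z \<in> W"
  shows "pd e2 f z = Bb z ^ 3 * D0 z ^ 3 - L3 z / La z + 3 * L2 z * d1 z / (La z * D0 z)
     + L1 z * d2 z / (La z * D0 z) - 3 * L1 z * d1 z ^ 2 / (La z * D0 z ^ 2)"
proof -
  have "pd e2 (Dhat f Et) z = pd e2 (\<lambda>y. Bb y ^ 3 * Psi y * D0 y) z" by (rule pd_cong[OF W z]) (use eqv in auto)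
  also have "\<dots> = Bb z ^ 3 * Psi z * Be1 z + (Bb z ^ 3 * (Chi z * Be z + La z) + 3 * Bb z ^ 2 * (A1 z * Be z) * Psi z) * D0 z"
    using dz[OF z] ct2 z by (simp add: pd_mult pd_power D0_u[OF z] Bb_pd[OF z] PhiBe algebra_simps)
  finally have 1: "pd e2 (Dhat f Et) z = Bb z ^ 3 * Psi z * Be1 z + (Bb z ^ 3 * (Chi z * Be z + La z) + 3 * Bb z ^ 2 * (A1 z * Be z) * Psi z) * D0 z" .
  have "Dhat f (pd e2 Et) z = Dhat f (\<lambda>y. Bb y ^ 3 * Psi y * Be y + L2 y / D0 y ^ 2 - L1 y * d1 y / D0 y ^ 3) z"
    by (rule Dhat_cong[OF W z]) (use eta_u in auto)
  also have "\<dots> = Be z * (Bb z ^ 3 * (Chi z * D0 z) + 3 * Bb z ^ 2 * (A1 z * D0 z) * Psi z) + Be1 z * (Bb z ^ 3 * Psi z)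
      + (L3 z * D0 z ^ 2 - L2 z * (2 * D0 z * d1 z)) / (D0 z ^ 2) ^ 2
      - ((L1 z * d2 z + L2 z * d1 z) * D0 z ^ 3 - L1 z * d1 z * (3 * D0 z ^ 2 * d1 z)) / (D0 z ^ 3) ^ 2"
    using dz[OF z] nz[OF z] by (simp add: Dhat_add Dhat_diff Dhat_mult Dhat_divide Dhat_power Dhat_const Bb_D[OF z] Psi_D[OF z] algebra_simps)
  finally have 2: "Dhat f (pd e2 Et) z = Be z * (Bb z ^ 3 * (Chi z * D0 z) + 3 * Bb z ^ 2 * (A1 z * D0 z) * Psi z) + Be1 z * (Bb z ^ 3 * Psi z)
      + (L3 z * D0 z ^ 2 - L2 z * (2 * D0 z * d1 z)) / (D0 z ^ 2) ^ 2
      - ((L1 z * d2 z + L2 z * d1 z) * D0 z ^ 3 - L1 z * d1 z * (3 * D0 z ^ 2 * d1 z)) / (D0 z ^ 3) ^ 2" .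
  have 3: "pd e2 (Dhat f Et) z = Dhat f (pd e2 Et) z + pd e2 f z * pd e4 Et z"
    by (rule comm_u[OF W sf sEta z])
  have 4: "pd e2 f z * (La z / D0 z ^ 2) = pd e2 (Dhat f Et) z - Dhat f (pd e2 Et) z"
    using 3 eta_q[OF z] by simp
  have 5: "pd e2 f z = (pd e2 (Dhat f Et) z - Dhat f (pd e2 Et) z) * D0 z ^ 2 / La z"
    using 4 nz[OF z] by (simp add: field_simps)
  show ?thesis unfolding 5 1 2 by (rule alg_fu[OF nz(1,2)[OF z]])
qed

end


lemma alg_I2:
  fixes a a1 a2 D d1 d2 :: real
  assumes "a \<noteq> 0" "D \<noteq> 0"
  shows "- (2/9) * (3 * a1 / a - 3 * d1 / D) ^ 2
     - (- 3 * a2 / a + 6 * a1 * d1 / (a * D) + d2 / D - 3 * d1 ^ 2 / D ^ 2)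
     - (1/3) * (3 * ((a2 * a - a1 * a1) / a ^ 2) - 3 * ((d2 * D - d1 * d1) / D ^ 2))
   = 2 * a2 / a - (a1 / a) ^ 2 - 2 * (a1 / a) * (d1 / D)"
  using assms by (simp add: field_simps) algebra
lemma alg_I3:
  fixes a a1 a2 a3 D d1 d2 B :: real
  assumes "a \<noteq> 0" "D \<noteq> 0"
  shows "- (1/3) * (3 * a1 / a - 3 * d1 / D) * (2 * a2 / a - (a1 / a) ^ 2 - 2 * (a1 / a) * (d1 / D))
     - (B ^ 3 * D ^ 3 - a3 / a + 3 * a2 * d1 / (a * D) + a1 * d2 / (a * D) - 3 * a1 * d1 ^ 2 / (a * D ^ 2))
     - (1/2) * (2 * ((a3 * a - a2 * a1) / a ^ 2) - 2 * (a1 / a) * ((a2 * a - a1 * a1) / a ^ 2)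
          - 2 * ((a1 / a) * ((d2 * D - d1 * d1) / D ^ 2) + ((a2 * a - a1 * a1) / a ^ 2) * (d1 / D)))
   = - ((B * D) ^ 3)"
  using assms by (simp add: field_simps) algebra

lemmas Dhat_rules = Dhat_add Dhat_diff Dhat_minus Dhat_mult Dhat_divide Dhat_power Dhat_const

context eqctx begin

lemma I1_eq: "z \<in> W \<Longrightarrow> I1 f z = 3 * L1 z / La z - 3 * d1 z / D0 z"
  by (simp add: I1_def pq4_pd f_q)

lemma DI1: assumes z: "z \<in> W"
  shows "Dhat f (I1 f) z = 3 * ((L2 z * La z - L1 z * L1 z) / La z ^ 2) - 3 * ((d2 z * D0 z - d1 z * d1 z) / D0 z ^ 2)"
proof -
  have "Dhat f (I1 f) z = Dhat f (\<lambda>y. 3 * L1 y / La y - 3 * d1 y / D0 y) z"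
    by (rule Dhat_cong[OF W z]) (use I1_eq in auto)
  also have "\<dots> = 3 * ((L2 z * La z - L1 z * L1 z) / La z ^ 2) - 3 * ((d2 z * D0 z - d1 z * d1 z) / D0 z ^ 2)"
    using dz[OF z] nz[OF z] by (simp add: Dhat_rules) (simp add: field_simps)
  finally show ?thesis .
qed

lemma I2_eq: assumes z: "z \<in> W"
  shows "I2 f z = 2 * L2 z / La z - (L1 z / La z) ^ 2 - 2 * (L1 z / La z) * (d1 z / D0 z)"
  unfolding I2_def I1_eq[OF z] DI1[OF z] pp4_pd f_p[OF z] by (rule alg_I2[OF nz(1,2)[OF z]])

lemma DI2: assumes z: "z \<in> W"
  shows "Dhat f (I2 f) z = 2 * ((L3 z * La z - L2 z * L1 z) / La z ^ 2) - 2 * (L1 z / La z) * ((L2 z * La z - L1 z * L1 z) / La z ^ 2)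
          - 2 * ((L1 z / La z) * ((d2 z * D0 z - d1 z * d1 z) / D0 z ^ 2) + ((L2 z * La z - L1 z * L1 z) / La z ^ 2) * (d1 z / D0 z))"
proof -
  have "Dhat f (I2 f) z = Dhat f (\<lambda>y. 2 * L2 y / La y - (L1 y / La y) ^ 2 - 2 * (L1 y / La y) * (d1 y / D0 y)) z"
    by (rule Dhat_cong[OF W z]) (use I2_eq in auto)
  also have "\<dots> = 2 * ((L3 z * La z - L2 z * L1 z) / La z ^ 2) - 2 * (L1 z / La z) * ((L2 z * La z - L1 z * L1 z) / La z ^ 2)
          - 2 * ((L1 z / La z) * ((d2 z * D0 z - d1 z * d1 z) / D0 z ^ 2) + ((L2 z * La z - L1 z * L1 z) / La z ^ 2) * (d1 z / D0 z))"
    using dz[OF z] nz[OF z] by (simp add: Dhat_rules) (simp add: field_simps, algebra)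
  finally show ?thesis .
qed

lemma I3_eq: assumes z: "z \<in> W" shows "I3 f z = - ((Bb z * D0 z) ^ 3)"
  unfolding I3_def I1_eq[OF z] I2_eq[OF z] DI2[OF z] pu4_pd f_u[OF z] by (rule alg_I3[OF nz(1,2)[OF z]])

end


lemma alg_I5:
  fixes a a1 D d1 B A :: real
  assumes "a \<noteq> 0" "D \<noteq> 0" "B \<noteq> 0"
  shows "((3 * a1 / a - 3 * d1 / D) * (- (B * D)) + 3 * (- (B * d1 + A * D * D))) / (3 * (- (B * D)) ^ 2)
     = - (A / B ^ 2) - a1 / (a * B * D)"
  using assms by (simp add: field_simps) algebra

lemma alg_I7:
  fixes a a1 lp D Al Be B :: real
  assumes "a \<noteq> 0" "D \<noteq> 0" "B \<noteq> 0" "lp * D = a1 * Al - a * Be"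
  shows "- (- ((lp * (a * B * D) - a1 * (a * B * Al)) / (a * B * D) ^ 2)) * (- (B * D)) ^ 2 = - (B * Be)"
proof -
  have "- (- ((lp * (a * B * D) - a1 * (a * B * Al)) / (a * B * D) ^ 2)) * (- (B * D)) ^ 2
      = B * (lp * D - a1 * Al) / a" using assms(1-3) by (simp add: field_simps) algebra
  also have "\<dots> = B * (- a * Be) / a" using assms(4) by simp
  also have "\<dots> = - (B * Be)" using assms(1) by simp
  finally show ?thesis .
qed

lemma alg_Q:
  fixes a a1 a2 lu D d1 Al Be Al1 Be1 B A A2 :: real
  assumes "a \<noteq> 0" "D \<noteq> 0" "B \<noteq> 0"
  defines "lp \<equiv> (a1 * Al - a * Be) / D"
  shows "lu = (A / B ^ 2 * (- (B * Be)) -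
     (- ((3 * a1 / a - 3 * d1 / D) * (- (B * Be))
        + 3 * (- (B * D)) ^ 2 * (- ((A2 * Al * B ^ 2 - A * (2 * B * (A * Al))) / (B ^ 2) ^ 2)
             - (((((a2 * Al + a1 * Al1 - (a1 * Be + a * Be1)) * D - (a1 * Al - a * Be) * d1) / D ^ 2) + lu) * (a * B * D)
                - a1 * (lp * B * D + a * (A * Al) * D + a * B * (Al1 + Be))) / (a * B * D) ^ 2)
        + 3 * (- (B * Be1 + A * Be * D))
        - 3 * (- (B * D)) * (- (B * Al)) * (- ((A2 * D * B ^ 2 - A * (2 * B * (A * D))) / (B ^ 2) ^ 2)
             - (a2 * (a * B * D) - a1 * (a1 * B * D + a * (A * D) * D + a * B * d1)) / (a * B * D) ^ 2))
       / (3 * (- (B * D))))) * a"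
  using assms(1-3) unfolding lp_def by (simp add: field_simps) algebra

lemma alg_K:
  fixes a a1 a2 D d1 B A A2 :: real
  assumes "a \<noteq> 0" "D \<noteq> 0" "B \<noteq> 0"
  shows "- (2 / (- (B * D))) * ((A2 * D * B ^ 2 - A * (2 * B * (A * D))) / (B ^ 2) ^ 2) + (A / B ^ 2) ^ 2
    = (2 * (- (B * D)) * (- ((A2 * D * B ^ 2 - A * (2 * B * (A * D))) / (B ^ 2) ^ 2)
             - (a2 * (a * B * D) - a1 * (a1 * B * D + a * (A * D) * D + a * B * d1)) / (a * B * D) ^ 2)
       - (2 * a2 / a - (a1 / a) ^ 2 - 2 * (a1 / a) * (d1 / D))
       + (- (B * D)) ^ 2 * (- (A / B ^ 2) - a1 / (a * B * D)) ^ 2) / (- (B * D)) ^ 2"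
  using assms by (simp add: field_simps) algebra


context eqctx begin

abbreviation "Hh \<equiv> (\<lambda>z. A1 z / Bb z ^ 2)"

lemma J3_eq: assumes z: "z \<in> W" shows "J3 f z = - (Bb z * D0 z)"
proof -
  have e: "I3 f z = (- (Bb z * D0 z)) ^ 3" using I3_eq[OF z] by simp
  show ?thesis unfolding J3_def e by (rule odd_real_root_power_cancel) simp
qed

lemma DJ3: assumes z: "z \<in> W" shows "Dhat f (J3 f) z = - (Bb z * d1 z + A1 z * D0 z * D0 z)"
proof -
  have "Dhat f (J3 f) z = Dhat f (\<lambda>y. - (Bb y * D0 y)) z"
    by (rule Dhat_cong[OF W z]) (use J3_eq in auto)
  also have "\<dots> = - (Bb z * d1 z + A1 z * D0 z * D0 z)"
    using dz[OF z] by (simp add: Dhat_rules Bb_D[OF z] algebra_simps)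
  finally show ?thesis .
qed

lemma J3_pd: assumes z: "z \<in> W" shows "pd v (J3 f) z = - (Bb z * pd v D0 z + A1 z * pd v Phi z * D0 z)"
proof -
  have "pd v (J3 f) z = pd v (\<lambda>y. - (Bb y * D0 y)) z"
    by (rule pd_cong[OF W z]) (use J3_eq in auto)
  also have "\<dots> = - (Bb z * pd v D0 z + A1 z * pd v Phi z * D0 z)"
    using dz[OF z] by (simp add: pd_minus pd_mult Bb_pd[OF z] algebra_simps)
  finally show ?thesis .
qed

lemma I4_eq: assumes z: "z \<in> W" shows "I4 f z = - (Bb z * Al z)"
  unfolding I4_def pq4_pd J3_pd[OF z] D0_q[OF z] q0 by simp

lemma I5_eq: assumes z: "z \<in> W" shows "I5 f z = - (A1 z / Bb z ^ 2) - L1 z / (La z * Bb z * D0 z)"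
  unfolding I5_def I1_eq[OF z] J3_eq[OF z] DJ3[OF z] by (rule alg_I5[OF nz(1,2,3)[OF z]])

lemma I5_fun: "\<forall>y\<in>W. I5 f y = - (A1 y / Bb y ^ 2) - L1 y / (La y * Bb y * D0 y)" using I5_eq by auto

lemma I5_q: assumes z: "z \<in> W"
  shows "pd e4 (I5 f) z = - ((pd e3 La z * (La z * Bb z * D0 z) - L1 z * (La z * Bb z * Al z)) / (La z * Bb z * D0 z) ^ 2)"
proof -
  have "pd e4 (I5 f) z = pd e4 (\<lambda>y. - (A1 y / Bb y ^ 2) - L1 y / (La y * Bb y * D0 y)) z"
    by (rule pd_cong[OF W z]) (use I5_fun in auto)
  also have "\<dots> = - ((pd e3 La z * (La z * Bb z * D0 z) - L1 z * (La z * Bb z * Al z)) / (La z * Bb z * D0 z) ^ 2)"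
    using dz[OF z] nz[OF z] by (simp add: pd_diff pd_minus pd_mult pd_divide pd_power q0 D0_q[OF z] commL(1)[OF sLa q0(4) z])
  finally show ?thesis .
qed

lemma I7_eq: assumes z: "z \<in> W" shows "I7 f z = - (Bb z * Be z)"
  unfolding I7_def pq4_pd I5_q[OF z] J3_eq[OF z] by (rule alg_I7[OF nz(1,2,3)[OF z] La_p[OF z]])

lemma La_p': assumes z: "z \<in> W" shows "pd e3 La z = (L1 z * Al z - La z * Be z) / D0 z"
  using La_p[OF z] nz[OF z] by (simp add: field_simps)

lemma DpLa: assumes z: "z \<in> W"
  shows "Dhat f (pd e3 La) z = ((L2 z * Al z + L1 z * Al1 z - (L1 z * Be z + La z * Be1 z)) * D0 z - (L1 z * Al z - La z * Be z) * d1 z) / D0 z ^ 2"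
proof -
  have "Dhat f (pd e3 La) z = Dhat f (\<lambda>y. (L1 y * Al y - La y * Be y) / D0 y) z"
    by (rule Dhat_cong[OF W z]) (use La_p' in auto)
  also have "\<dots> = ((L2 z * Al z + L1 z * Al1 z - (L1 z * Be z + La z * Be1 z)) * D0 z - (L1 z * Al z - La z * Be z) * d1 z) / D0 z ^ 2"
    using dz[OF z] nz[OF z] by (simp add: Dhat_rules algebra_simps)
  finally show ?thesis .
qed

lemma L1_p: assumes z: "z \<in> W" shows "pd e3 L1 z = Dhat f (pd e3 La) z + pd e2 La z"
  by (rule commL(2)[OF sLa q0(4) z])

lemma I5_p: assumes z: "z \<in> W"
  shows "pd e3 (I5 f) z = - ((A2 z * Al z * Bb z ^ 2 - A1 z * (2 * Bb z * (A1 z * Al z))) / (Bb z ^ 2) ^ 2)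
     - (pd e3 L1 z * (La z * Bb z * D0 z) - L1 z * (pd e3 La z * Bb z * D0 z + La z * (A1 z * Al z) * D0 z + La z * Bb z * (Al1 z + Be z))) / (La z * Bb z * D0 z) ^ 2"
proof -
  have "pd e3 (I5 f) z = pd e3 (\<lambda>y. - (A1 y / Bb y ^ 2) - L1 y / (La y * Bb y * D0 y)) z"
    by (rule pd_cong[OF W z]) (use I5_fun in auto)
  also have "\<dots> = - ((A2 z * Al z * Bb z ^ 2 - A1 z * (2 * Bb z * (A1 z * Al z))) / (Bb z ^ 2) ^ 2)
     - (pd e3 L1 z * (La z * Bb z * D0 z) - L1 z * (pd e3 La z * Bb z * D0 z + La z * (A1 z * Al z) * D0 z + La z * Bb z * (Al1 z + Be z))) / (La z * Bb z * D0 z) ^ 2"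
    using dz[OF z] nz[OF z] by (simp add: pd_diff pd_minus pd_mult pd_divide pd_power Bb_pd[OF z] A1_pd[OF z] PhiAl D0_p[OF z] algebra_simps)
  finally show ?thesis .
qed

lemma DHh: assumes z: "z \<in> W"
  shows "Dhat f Hh z = (A2 z * D0 z * Bb z ^ 2 - A1 z * (2 * Bb z * (A1 z * D0 z))) / (Bb z ^ 2) ^ 2"
  using dz[OF z] nz[OF z] by (simp add: Dhat_rules Bb_D[OF z] A1_D[OF z] algebra_simps)

lemma DI5: assumes z: "z \<in> W"
  shows "Dhat f (I5 f) z = - ((A2 z * D0 z * Bb z ^ 2 - A1 z * (2 * Bb z * (A1 z * D0 z))) / (Bb z ^ 2) ^ 2)
     - (L2 z * (La z * Bb z * D0 z) - L1 z * (L1 z * Bb z * D0 z + La z * (A1 z * D0 z) * D0 z + La z * Bb z * d1 z)) / (La z * Bb z * D0 z) ^ 2"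
proof -
  have "Dhat f (I5 f) z = Dhat f (\<lambda>y. - (A1 y / Bb y ^ 2) - L1 y / (La y * Bb y * D0 y)) z"
    by (rule Dhat_cong[OF W z]) (use I5_fun in auto)
  also have "\<dots> = - ((A2 z * D0 z * Bb z ^ 2 - A1 z * (2 * Bb z * (A1 z * D0 z))) / (Bb z ^ 2) ^ 2)
     - (L2 z * (La z * Bb z * D0 z) - L1 z * (L1 z * Bb z * D0 z + La z * (A1 z * D0 z) * D0 z + La z * Bb z * d1 z)) / (La z * Bb z * D0 z) ^ 2"
    using dz[OF z] nz[OF z] by (simp add: Dhat_rules Bb_D[OF z] A1_D[OF z] algebra_simps)
  finally show ?thesis .
qed

lemma J3_u: assumes z: "z \<in> W" shows "pd e2 (J3 f) z = - (Bb z * Be1 z + A1 z * Be z * D0 z)"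
  unfolding J3_pd[OF z] D0_u[OF z] PhiBe ..

lemma Q_claim: assumes z: "z \<in> W" shows "pd e2 La z = (Hh z * I7 f z - Qinv f z) * La z"
  unfolding Qinv_def I1_eq[OF z] I7_eq[OF z] J3_eq[OF z] pp4_pd pu4_pd I5_p[OF z] L1_p[OF z] DpLa[OF z]
    La_p'[OF z] J3_u[OF z] I4_eq[OF z] DI5[OF z]
  by (rule alg_Q[OF nz(1,2,3)[OF z]])

lemma K_claim: assumes z: "z \<in> W" shows "- (2 / J3 f z) * Dhat f Hh z + (Hh z) ^ 2 = Kinv f z"
  unfolding Kinv_def I9_def J3_eq[OF z] DHh[OF z] DI5[OF z] I2_eq[OF z] I5_eq[OF z]
  by (rule alg_K[OF nz(1,2,3)[OF z]])

end


lemma px3_pd: "px3 g = pd (1,0,0) g"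
proof
  fix z :: R3
  obtain x u p where z: "z = (x,u,p)" by (cases z) auto
  have "px3 g z = deriv ((\<lambda>t. g (t,u,p)) \<circ> (\<lambda>t. x + t)) 0"
    unfolding z px3_def by (simp add: deriv_shift_0[symmetric])
  also have "((\<lambda>t. g (t,u,p)) \<circ> (\<lambda>t. x + t)) = (\<lambda>t. g (z + t *\<^sub>R (1,0,0)))"
    by (auto simp: z)
  finally show "px3 g z = pd (1,0,0) g z" by (simp add: pd_def)
qed

lemma pu3_pd: "pu3 g = pd (0,1,0) g"
proof
  fix z :: R3
  obtain x u p where z: "z = (x,u,p)" by (cases z) auto
  have "pu3 g z = deriv ((\<lambda>t. g (x,t,p)) \<circ> (\<lambda>t. u + t)) 0"
    unfolding z pu3_def by (simp add: deriv_shift_0[symmetric])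
  also have "((\<lambda>t. g (x,t,p)) \<circ> (\<lambda>t. u + t)) = (\<lambda>t. g (z + t *\<^sub>R (0,1,0)))"
    by (auto simp: z)
  finally show "pu3 g z = pd (0,1,0) g z" by (simp add: pd_def)
qed

lemma pp3_pd: "pp3 g = pd (0,0,1) g"
proof
  fix z :: R3
  obtain x u p where z: "z = (x,u,p)" by (cases z) auto
  have "pp3 g z = deriv ((\<lambda>t. g (x,u,t)) \<circ> (\<lambda>t. p + t)) 0"
    unfolding z pp3_def by (simp add: deriv_shift_0[symmetric])
  also have "((\<lambda>t. g (x,u,t)) \<circ> (\<lambda>t. p + t)) = (\<lambda>t. g (z + t *\<^sub>R (0,0,1)))"
    by (auto simp: z)
  finally show "pp3 g z = pd (0,0,1) g z" by (simp add: pd_def)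
qed

lemma e3_Basis: "(0::real,1::real,0::real) \<in> Basis" "(0::real,0::real,1::real) \<in> Basis" "(1::real,0::real,0::real) \<in> Basis"
  by (simp_all add: Basis_prod_def zero_prod_def)

theorem mainTheorem4:
  fixes f :: "R4 \<Rightarrow> real" and W :: "R4 set" and V :: "R3 set"
    and phi psi chi :: "R3 \<Rightarrow> real" and abar :: "real \<Rightarrow> real" and T :: "real set"
    and H b :: "R3 \<Rightarrow> real" and eta :: "R4 \<Rightarrow> real" and fbar :: "R3 \<Rightarrow> real"
  assumes W_open: "open W"
    and f_smooth: "smooth_on W f"
    and I3_nz: "\<forall>z\<in>W. I3 f z \<noteq> 0"
    and WV: "\<forall>x u p q. (x,u,p,q) \<in> W \<longrightarrow> (x,u,p) \<in> V"
    and contact: "contact_transformation V phi psi chi"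
    and T_open: "open T" and phiT: "phi ` V \<subseteq> T"
    and abar_smooth: "smooth_on T abar"
    and abar_nz: "\<forall>z\<in>V. abar (phi z) \<noteq> 0"
    and equiv: "equivalent_to_linear f W phi psi chi abar"
    and H_def: "H \<equiv> (\<lambda>z. deriv abar (phi z) / (abar (phi z))^2)"
    and b_def: "b \<equiv> (\<lambda>z. abar (phi z))"
    and eta_def: "eta \<equiv> (\<lambda>z. Dhat f (lift3 chi) z / Dhat f (lift3 phi) z)"
    and fbar_def: "fbar \<equiv> (\<lambda>z. (abar (phi z))^3 * psi z)"
  shows
    \<comment> \<open>(1)\<close>
    "(\<forall>z\<in>W. - (2 / J3 f z) * Dhat f (lift3 H) z + (lift3 H z)^2 = Kinv f z)
     \<comment> \<open>(2)\<close>
     \<and> (\<forall>z\<in>W. Dhat f (lift3 b) z = - J3 f z * lift3 H z * lift3 b z)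
     \<and> (\<exists>a1 :: R3 \<Rightarrow> real. smooth_on V a1 \<and> (\<forall>z\<in>V. a1 z \<noteq> 0) \<and>
        \<comment> \<open>(3)\<close>
        (\<forall>z\<in>W.
           Dhat f (lift3 a1) z = J3 f z * (lift3 H z + I5 f z) * lift3 a1 z
         \<and> pu4 (lift3 a1) z = (lift3 H z * I7 f z - Qinv f z) * lift3 a1 z
         \<and> pp4 (lift3 a1) z = (I4 f z * (lift3 H z + I5 f z) - I7 f z / J3 f z) * lift3 a1 z
         \<and> pq4 (lift3 a1) z = 0) \<and>
        \<comment> \<open>(4)\<close>
        (\<forall>z\<in>W.
           Dhat f (lift3 phi) z = - J3 f z / lift3 b z
         \<and> pu4 (lift3 phi) z = - I7 f z / lift3 b z
         \<and> pp4 (lift3 phi) z = - I4 f z / lift3 b z) \<and>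
        \<comment> \<open>(5)\<close>
        (\<forall>z\<in>W.
           Dhat f eta z = - J3 f z / lift3 b z * lift3 fbar z
         \<and> pu4 eta z = ((lift3 H z + I5 f z)^2 / 2 + I2 f z / (2 * (J3 f z)^2))
                        * (lift3 b z)^2 * lift3 a1 z - I7 f z / lift3 b z * lift3 fbar z
         \<and> pp4 eta z = ((lift3 H z + I5 f z) / J3 f z + I1 f z / (3 * (J3 f z)^2))
                        * (lift3 b z)^2 * lift3 a1 z - I4 f z / lift3 b z * lift3 fbar z
         \<and> pq4 eta z = (lift3 b z)^2 * lift3 a1 z / (J3 f z)^2
         \<and> Dhat f (lift3 chi) z = - J3 f z / lift3 b z * eta z
         \<and> pu4 (lift3 chi) z = - (lift3 H z + I5 f z) * lift3 b z * lift3 a1 z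
                                - I7 f z / lift3 b z * eta z
         \<and> pp4 (lift3 chi) z = - lift3 b z * lift3 a1 z / J3 f z - I4 f z / lift3 b z * eta z
         \<and> I7 f z * Dhat f (lift3 psi) z = J3 f z * (pu4 (lift3 psi) z - lift3 a1 z)
         \<and> px4 (lift3 psi) z = lift3 chi z * px4 (lift3 phi) z
                                - fst (snd (snd z)) * lift3 a1 z
         \<and> pp4 (lift3 psi) z = - I4 f z / lift3 b z * lift3 chi z
         \<and> lift3 chi z = Dhat f (lift3 psi) z / Dhat f (lift3 phi) z))"
proof -
  from contact have V: "open V" and sphi: "smooth_on V phi" and spsi: "smooth_on V psi"
    and schi: "smooth_on V chi"
    and jac: "\<forall>z\<in>V.
        px3 phi z * (pu3 psi z * pp3 chi z - pp3 psi z * pu3 chi z)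
      - pu3 phi z * (px3 psi z * pp3 chi z - pp3 psi z * px3 chi z)
      + pp3 phi z * (px3 psi z * pu3 chi z - pu3 psi z * px3 chi z) \<noteq> 0"
    and "\<exists>lam :: R3 \<Rightarrow> real. \<forall>x u p. (x,u,p) \<in> V \<longrightarrow>
        px3 psi (x,u,p) - chi (x,u,p) * px3 phi (x,u,p) = - p * lam (x,u,p) \<and>
        pu3 psi (x,u,p) - chi (x,u,p) * pu3 phi (x,u,p) = lam (x,u,p) \<and>
        pp3 psi (x,u,p) - chi (x,u,p) * pp3 phi (x,u,p) = 0"
    unfolding contact_transformation_def by blast+
  then obtain lam :: "R3 \<Rightarrow> real" where lam: "\<forall>x u p. (x,u,p) \<in> V \<longrightarrow>
        px3 psi (x,u,p) - chi (x,u,p) * px3 phi (x,u,p) = - p * lam (x,u,p) \<and>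
        pu3 psi (x,u,p) - chi (x,u,p) * pu3 phi (x,u,p) = lam (x,u,p) \<and>
        pp3 psi (x,u,p) - chi (x,u,p) * pp3 phi (x,u,p) = 0" by blast
  define a1 where "a1 = (\<lambda>z. pu3 psi z - chi z * pu3 phi z)"
  have ct: "px3 psi (x,u,p) = chi (x,u,p) * px3 phi (x,u,p) - p * a1 (x,u,p)"
    "pu3 psi (x,u,p) = chi (x,u,p) * pu3 phi (x,u,p) + a1 (x,u,p)"
    "pp3 psi (x,u,p) = chi (x,u,p) * pp3 phi (x,u,p)"
    if "(x,u,p) \<in> V" for x u p
    using lam that unfolding a1_def by (auto simp: algebra_simps)
  have a1_nz: "\<forall>z\<in>V. a1 z \<noteq> 0"
  proof
    fix z assume zV: "z \<in> V"
    obtain x u p where z: "z = (x,u,p)" by (cases z) auto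
    show "a1 z \<noteq> 0"
    proof
      assume "a1 z = 0"
      then have "px3 psi z = chi z * px3 phi z" "pu3 psi z = chi z * pu3 phi z" "pp3 psi z = chi z * pp3 phi z"
        using ct[of x u p] zV z by auto
      then show False using jac zV by (auto simp: algebra_simps)
    qed
  qed
  have a1_smooth: "smooth_on V a1"
  proof -
    have "sm V (\<lambda>z. pd (0,1,0) psi z + (-1) * (chi z * pd (0,1,0) phi z))"
      by (rule sm.sm_add[OF sm.sm_base[OF smooth_pd[OF V spsi e3_Basis(1)]]
            sm.sm_mul[OF sm.sm_base[OF smooth_const[OF V]] sm.sm_mul[OF sm.sm_base[OF schi] sm.sm_base[OF smooth_pd[OF V sphi e3_Basis(1)]]]]])
    then have "smooth_on V (\<lambda>z. pd (0,1,0) psi z + (-1) * (chi z * pd (0,1,0) phi z))" by (rule sm_smooth[OF V])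
    then show ?thesis by (rule smooth_cong[OF V]) (auto simp: a1_def pu3_pd)
  qed
  have WVz: "\<exists>x u p q. z = (x,u,p,q) \<and> (x,u,p) \<in> V" if "z \<in> W" for z
    using WV that by (cases z) auto
  let ?Phi = "lift3 phi" and ?Psi = "lift3 psi" and ?Chi = "lift3 chi" and ?La = "lift3 a1"
  let ?Al = "lift3 (pp3 phi)" and ?Be = "lift3 (pu3 phi)" and ?Bb = "lift3 b"
  let ?A1 = "lift3 (\<lambda>y. deriv abar (phi y))" and ?A2 = "lift3 (\<lambda>y. deriv (deriv abar) (phi y))"
  have sl: "smooth_on W (lift3 g)" if "smooth_on V g" for g by (rule smooth_lift3[OF W_open V WV that])
  have h_sPhi: "smooth_on W ?Phi" by (rule sl[OF sphi])
  have h_sPsi: "smooth_on W ?Psi" by (rule sl[OF spsi])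
  have h_sChi: "smooth_on W ?Chi" by (rule sl[OF schi])
  have h_sLa: "smooth_on W ?La" by (rule sl[OF a1_smooth])
  have h_sAl: "smooth_on W ?Al" unfolding pp3_pd by (rule sl[OF smooth_pd[OF V sphi e3_Basis(2)]])
  have h_sBe: "smooth_on W ?Be" unfolding pu3_pd by (rule sl[OF smooth_pd[OF V sphi e3_Basis(1)]])
  have h_PhiAl: "pd e3 ?Phi = ?Al" by (rule ext) (simp add: pp4_pd[symmetric] lift3_pp)
  have h_PhiBe: "pd e2 ?Phi = ?Be" by (rule ext) (simp add: pu4_pd[symmetric] lift3_pu)
  have h_q0: "\<And>z. pd e4 (lift3 g) z = 0" for g by (rule lift3_pd4)
  have h_ct1: "\<forall>z\<in>W. pd e1 ?Psi z = ?Chi z * pd e1 ?Phi z - pco z * ?La z"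
  proof
    fix z assume "z \<in> W"
    then obtain x u p q where z: "z = (x,u,p,q)" "(x,u,p) \<in> V" using WVz by blast
    show "pd e1 ?Psi z = ?Chi z * pd e1 ?Phi z - pco z * ?La z"
      using ct(1)[OF z(2)] unfolding px4_pd[symmetric] lift3_px by (simp add: z lift3_def pco_def)
  qed
  have h_ct2: "\<forall>z\<in>W. pd e2 ?Psi z = ?Chi z * ?Be z + ?La z"
  proof
    fix z assume "z \<in> W"
    then obtain x u p q where z: "z = (x,u,p,q)" "(x,u,p) \<in> V" using WVz by blast
    show "pd e2 ?Psi z = ?Chi z * ?Be z + ?La z"
      using ct(2)[OF z(2)] unfolding pu4_pd[symmetric] lift3_pu by (simp add: z lift3_def)
  qed
  have h_ct3: "\<forall>z\<in>W. pd e3 ?Psi z = ?Chi z * ?Al z"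
  proof
    fix z assume "z \<in> W"
    then obtain x u p q where z: "z = (x,u,p,q)" "(x,u,p) \<in> V" using WVz by blast
    show "pd e3 ?Psi z = ?Chi z * ?Al z"
      using ct(3)[OF z(2)] unfolding pp4_pd[symmetric] lift3_pp by (simp add: z lift3_def)
  qed
  have h_La_nz: "\<forall>z\<in>W. ?La z \<noteq> 0"
  proof
    fix z assume "z \<in> W"
    then obtain x u p q where z: "z = (x,u,p,q)" "(x,u,p) \<in> V" using WVz by blast
    show "?La z \<noteq> 0" using a1_nz z by (simp add: lift3_def)
  qed
  have h_D0_nz: "\<forall>z\<in>W. Dhat f ?Phi z \<noteq> 0" using equiv unfolding equivalent_to_linear_def by blast
  have h_Bb_nz: "\<forall>z\<in>W. ?Bb z \<noteq> 0"
  proof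
    fix z assume "z \<in> W"
    then obtain x u p q where z: "z = (x,u,p,q)" "(x,u,p) \<in> V" using WVz by blast
    show "?Bb z \<noteq> 0" using abar_nz z by (simp add: lift3_def b_def)
  qed
  have h_PhiT: "\<forall>z\<in>W. ?Phi z \<in> T"
  proof
    fix z assume "z \<in> W"
    then obtain x u p q where z: "z = (x,u,p,q)" "(x,u,p) \<in> V" using WVz by blast
    show "?Phi z \<in> T" using phiT z by (auto simp: lift3_def)
  qed
  have h_Bb: "\<And>z. ?Bb z = abar (?Phi z)" by (simp add: lift3_def b_def split: prod.splits)
  have h_A1: "\<And>z. ?A1 z = deriv abar (?Phi z)" by (simp add: lift3_def split: prod.splits)
  have h_A2: "\<And>z. ?A2 z = deriv (deriv abar) (?Phi z)" by (simp add: lift3_def split: prod.splits)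
  have h_Et: "\<And>z. eta z = Dhat f ?Chi z / Dhat f ?Phi z" by (simp add: eta_def)
  have h_eqv: "\<forall>z\<in>W. Dhat f eta z = ?Bb z ^ 3 * ?Psi z * Dhat f ?Phi z"
  proof
    fix z assume z: "z \<in> W"
    have "Dhat f eta z / Dhat f ?Phi z = (abar (?Phi z)) ^ 3 * ?Psi z"
      using equiv z unfolding equivalent_to_linear_def eta_def Let_def by blast
    then show "Dhat f eta z = ?Bb z ^ 3 * ?Psi z * Dhat f ?Phi z"
      using h_D0_nz z h_Bb[of z] by (simp add: field_simps)
  qed
  interpret E: eqctx f W ?Phi ?Psi ?Chi ?La ?Al ?Be ?Bb ?A1 ?A2 eta abar T
    by (rule eqctx.intro[OF W_open f_smooth h_sPhi h_sPsi h_sChi h_sLa h_sAl h_sBe h_PhiAl h_PhiBe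
        h_q0 h_q0 h_q0 h_q0 h_q0 h_q0 h_q0 h_q0 h_q0 h_ct1 h_ct2 h_ct3 h_La_nz h_D0_nz h_Bb_nz
        T_open abar_smooth h_PhiT h_Bb h_A1 h_A2 h_Et h_eqv])
  have H_fun: "lift3 H = (\<lambda>z. ?A1 z / ?Bb z ^ 2)" by (rule ext) (simp add: lift3_def H_def b_def split: prod.splits)
  have fbar_fun: "lift3 fbar = (\<lambda>z. ?Bb z ^ 3 * ?Psi z)" by (rule ext) (simp add: lift3_def fbar_def b_def split: prod.splits)
  have cl: "Dhat f (lift3 a1) z = J3 f z * (lift3 H z + I5 f z) * lift3 a1 z
         \<and> pu4 (lift3 a1) z = (lift3 H z * I7 f z - Qinv f z) * lift3 a1 z
         \<and> pp4 (lift3 a1) z = (I4 f z * (lift3 H z + I5 f z) - I7 f z / J3 f z) * lift3 a1 z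
         \<and> pq4 (lift3 a1) z = 0"
    if z: "z \<in> W" for z
  proof (intro conjI)
    note nz = E.nz[OF z]
    show "Dhat f (lift3 a1) z = J3 f z * (lift3 H z + I5 f z) * lift3 a1 z"
      unfolding H_fun E.J3_eq[OF z] E.I5_eq[OF z] using nz by (simp add: field_simps)
    show "pu4 (lift3 a1) z = (lift3 H z * I7 f z - Qinv f z) * lift3 a1 z"
      unfolding H_fun pu4_pd by (rule E.Q_claim[OF z])
    show "pp4 (lift3 a1) z = (I4 f z * (lift3 H z + I5 f z) - I7 f z / J3 f z) * lift3 a1 z"
      unfolding H_fun pp4_pd E.La_p'[OF z] E.I4_eq[OF z] E.I5_eq[OF z] E.I7_eq[OF z] E.J3_eq[OF z]
      using nz by (simp add: field_simps)
    show "pq4 (lift3 a1) z = 0" unfolding pq4_pd by (rule lift3_pd4)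
  qed
  have c4: "Dhat f (lift3 phi) z = - J3 f z / lift3 b z
         \<and> pu4 (lift3 phi) z = - I7 f z / lift3 b z
         \<and> pp4 (lift3 phi) z = - I4 f z / lift3 b z"
    if z: "z \<in> W" for z
  proof (intro conjI)
    note nz = E.nz[OF z]
    show "Dhat f (lift3 phi) z = - J3 f z / lift3 b z" unfolding E.J3_eq[OF z] using nz by simp
    show "pu4 (lift3 phi) z = - I7 f z / lift3 b z" unfolding E.I7_eq[OF z] pu4_pd h_PhiBe using nz by simp
    show "pp4 (lift3 phi) z = - I4 f z / lift3 b z" unfolding E.I4_eq[OF z] pp4_pd h_PhiAl using nz by simp
  qed
  have c5: "Dhat f eta z = - J3 f z / lift3 b z * lift3 fbar z
         \<and> pu4 eta z = ((lift3 H z + I5 f z)^2 / 2 + I2 f z / (2 * (J3 f z)^2))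
                        * (lift3 b z)^2 * lift3 a1 z - I7 f z / lift3 b z * lift3 fbar z
         \<and> pp4 eta z = ((lift3 H z + I5 f z) / J3 f z + I1 f z / (3 * (J3 f z)^2))
                        * (lift3 b z)^2 * lift3 a1 z - I4 f z / lift3 b z * lift3 fbar z
         \<and> pq4 eta z = (lift3 b z)^2 * lift3 a1 z / (J3 f z)^2
         \<and> Dhat f (lift3 chi) z = - J3 f z / lift3 b z * eta z
         \<and> pu4 (lift3 chi) z = - (lift3 H z + I5 f z) * lift3 b z * lift3 a1 z
                                - I7 f z / lift3 b z * eta z
         \<and> pp4 (lift3 chi) z = - lift3 b z * lift3 a1 z / J3 f z - I4 f z / lift3 b z * eta z
         \<and> I7 f z * Dhat f (lift3 psi) z = J3 f z * (pu4 (lift3 psi) z - lift3 a1 z)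
         \<and> px4 (lift3 psi) z = lift3 chi z * px4 (lift3 phi) z
                                - fst (snd (snd z)) * lift3 a1 z
         \<and> pp4 (lift3 psi) z = - I4 f z / lift3 b z * lift3 chi z
         \<and> lift3 chi z = Dhat f (lift3 psi) z / Dhat f (lift3 phi) z"
    if z: "z \<in> W" for z
  proof (intro conjI)
    note nz = E.nz[OF z]
    show "Dhat f eta z = - J3 f z / lift3 b z * lift3 fbar z"
      unfolding fbar_fun E.J3_eq[OF z] E.Et_D[OF z] using nz by (simp add: field_simps)
    show "pu4 eta z = ((lift3 H z + I5 f z)^2 / 2 + I2 f z / (2 * (J3 f z)^2))
                        * (lift3 b z)^2 * lift3 a1 z - I7 f z / lift3 b z * lift3 fbar z"
      unfolding pu4_pd fbar_fun H_fun E.eta_u[OF z] E.I5_eq[OF z] E.I2_eq[OF z] E.J3_eq[OF z] E.I7_eq[OF z]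
      using nz by (simp add: field_simps) algebra
    show "pp4 eta z = ((lift3 H z + I5 f z) / J3 f z + I1 f z / (3 * (J3 f z)^2))
                        * (lift3 b z)^2 * lift3 a1 z - I4 f z / lift3 b z * lift3 fbar z"
      unfolding pp4_pd fbar_fun H_fun E.eta_p[OF z] E.I5_eq[OF z] E.I1_eq[OF z] E.J3_eq[OF z] E.I4_eq[OF z]
      using nz by (simp add: field_simps) algebra
    show "pq4 eta z = (lift3 b z)^2 * lift3 a1 z / (J3 f z)^2"
      unfolding pq4_pd E.eta_q[OF z] E.J3_eq[OF z] using nz by (simp add: field_simps)
    show "Dhat f (lift3 chi) z = - J3 f z / lift3 b z * eta z"
      using E.Et_DC z unfolding E.J3_eq[OF z] using nz by simp
    show "pu4 (lift3 chi) z = - (lift3 H z + I5 f z) * lift3 b z * lift3 a1 z - I7 f z / lift3 b z * eta z"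
      using E.chi_u' z unfolding pu4_pd H_fun E.I5_eq[OF z] E.I7_eq[OF z] using nz by (simp add: field_simps)
    show "pp4 (lift3 chi) z = - lift3 b z * lift3 a1 z / J3 f z - I4 f z / lift3 b z * eta z"
      using E.chi_p' z unfolding pp4_pd E.J3_eq[OF z] E.I4_eq[OF z] using nz by (simp add: field_simps)
    show "I7 f z * Dhat f (lift3 psi) z = J3 f z * (pu4 (lift3 psi) z - lift3 a1 z)"
      using h_ct2 z unfolding pu4_pd E.I7_eq[OF z] E.J3_eq[OF z] E.Psi_D[OF z] by (simp add: algebra_simps)
    show "px4 (lift3 psi) z = lift3 chi z * px4 (lift3 phi) z - fst (snd (snd z)) * lift3 a1 z"
      using h_ct1 z unfolding px4_pd by (simp add: pco_def)
    show "pp4 (lift3 psi) z = - I4 f z / lift3 b z * lift3 chi z"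
      using h_ct3 z unfolding pp4_pd E.I4_eq[OF z] using nz by simp
    show "lift3 chi z = Dhat f (lift3 psi) z / Dhat f (lift3 phi) z"
      unfolding E.Psi_D[OF z] using nz by simp
  qed
  show ?thesis
  proof (intro conjI)
    show "\<forall>z\<in>W. - (2 / J3 f z) * Dhat f (lift3 H) z + (lift3 H z)^2 = Kinv f z"
      unfolding H_fun using E.K_claim by blast
    show "\<forall>z\<in>W. Dhat f (lift3 b) z = - J3 f z * lift3 H z * lift3 b z"
    proof
      fix z assume z: "z \<in> W"
      show "Dhat f (lift3 b) z = - J3 f z * lift3 H z * lift3 b z"
        unfolding H_fun E.Bb_D[OF z] E.J3_eq[OF z] using E.nz[OF z] by (simp add: field_simps power2_eq_square)
    qed
    show "\<exists>a1 :: R3 \<Rightarrow> real. smooth_on V a1 \<and> (\<forall>z\<in>V. a1 z \<noteq> 0) \<and>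
        (\<forall>z\<in>W.
           Dhat f (lift3 a1) z = J3 f z * (lift3 H z + I5 f z) * lift3 a1 z
         \<and> pu4 (lift3 a1) z = (lift3 H z * I7 f z - Qinv f z) * lift3 a1 z
         \<and> pp4 (lift3 a1) z = (I4 f z * (lift3 H z + I5 f z) - I7 f z / J3 f z) * lift3 a1 z
         \<and> pq4 (lift3 a1) z = 0) \<and>
        (\<forall>z\<in>W.
           Dhat f (lift3 phi) z = - J3 f z / lift3 b z
         \<and> pu4 (lift3 phi) z = - I7 f z / lift3 b z
         \<and> pp4 (lift3 phi) z = - I4 f z / lift3 b z) \<and>
        (\<forall>z\<in>W.
           Dhat f eta z = - J3 f z / lift3 b z * lift3 fbar z
         \<and> pu4 eta z = ((lift3 H z + I5 f z)^2 / 2 + I2 f z / (2 * (J3 f z)^2))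
                        * (lift3 b z)^2 * lift3 a1 z - I7 f z / lift3 b z * lift3 fbar z
         \<and> pp4 eta z = ((lift3 H z + I5 f z) / J3 f z + I1 f z / (3 * (J3 f z)^2))
                        * (lift3 b z)^2 * lift3 a1 z - I4 f z / lift3 b z * lift3 fbar z
         \<and> pq4 eta z = (lift3 b z)^2 * lift3 a1 z / (J3 f z)^2
         \<and> Dhat f (lift3 chi) z = - J3 f z / lift3 b z * eta z
         \<and> pu4 (lift3 chi) z = - (lift3 H z + I5 f z) * lift3 b z * lift3 a1 z
                                - I7 f z / lift3 b z * eta z
         \<and> pp4 (lift3 chi) z = - lift3 b z * lift3 a1 z / J3 f z - I4 f z / lift3 b z * eta z
         \<and> I7 f z * Dhat f (lift3 psi) z = J3 f z * (pu4 (lift3 psi) z - lift3 a1 z)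
         \<and> px4 (lift3 psi) z = lift3 chi z * px4 (lift3 phi) z
                                - fst (snd (snd z)) * lift3 a1 z
         \<and> pp4 (lift3 psi) z = - I4 f z / lift3 b z * lift3 chi z
         \<and> lift3 chi z = Dhat f (lift3 psi) z / Dhat f (lift3 phi) z)"
      using a1_smooth a1_nz cl c4 c5 by blast
  qed
qed


end
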